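(* Let $(P_n)_{n\ge0}$ be defined by $P_0(m)=m$ and $P_{n+1}(m)=P_n(m+1)+\sum_{i=0}^{n}P_i(m)P_{n-i}(m)$, write $P_n(m)=\sum_{i=1}^{n+2}p^{(i)}_n m^{n+2-i}$ (with $p^{(i)}_n=0$ for $i>n+2$), and let $a_i(z)=\sum_{n\ge0}p^{(i)}_n z^n$. Then for every $i>2$, \[a_i(z)=z^{i-2}\left(\frac{Q_i(z)}{(1-4z)^{i-2}}+\frac{S_i(z)}{(1-4z)^{i-\frac32}}\right),\] where $Q_i$ and $S_i$ are polynomials in $z$ with integer coefficients, $\deg Q_i=\left\lfloor\frac{i-3}{2}\right\rfloor$ and $\deg S_i=\left\lfloor\frac{i-1}{2}\right\rfloor$.
   Context: $p^{(i)}_n$ is the $i$-th leading coefficient of $P_n$, which has degree $n+1$. The identity is between power series around $z=0$ (principal branch of $(1-4z)^{1/2}$). *)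

theory Defs
  imports "HOL-Computational_Algebra.Computational_Algebra"
begin

fun P :: "nat \<Rightarrow> int poly" where
  "P 0 = [:0, 1:]"
| "P (Suc n) = pcompose (P n) [:1, 1:] + (\<Sum>i\<le>n. P i * P (n - i))"

definition pc :: "nat \<Rightarrow> nat \<Rightarrow> int" where
  "pc i n = (if 1 \<le> i \<and> i \<le> n + 2 then coeff (P n) (n + 2 - i) else 0)"

definition a :: "nat \<Rightarrow> real fps" where
  "a i = Abs_fps (\<lambda>n. of_int (pc i n))"

definition one_minus_4z_pow :: "real \<Rightarrow> real fps" where
  "one_minus_4z_pow r = fps_compose (fps_binomial r) (- 4 * fps_X)"

end

theory Submission
  imports Defs
begin

abbreviation om where "om \<equiv> one_minus_4z_pow"

lemma m4X: "(-4 * fps_X :: real fps) = fps_const (-4) * fps_X"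
  by (simp add: numeral_fps_const)

lemma om_nth: "om r $ n = (r gchoose n) * (-4)^n"
  unfolding one_minus_4z_pow_def m4X fps_compose_linear by simp

lemma om_add: "om r * om q = om (r + q)"
  unfolding one_minus_4z_pow_def
  by (subst fps_compose_mult_distrib[symmetric]) (simp_all add: fps_binomial_add_mult)

lemma om_0: "om 0 = 1"
  by (rule fps_ext) (simp add: om_nth gbinomial_0_left)

lemma om_1: "om 1 = 1 - 4 * fps_X"
proof (rule fps_ext)
  fix n show "om 1 $ n = (1 - 4 * fps_X :: real fps) $ n"
  proof (cases n)
    case 0 then show ?thesis by (simp add: om_nth)
  next
    case (Suc m) then show ?thesis
    proof (cases m)
      case 0 then show ?thesis using Suc by (simp add: om_nth numeral_fps_const)
    next
      case (Suc k)
      have "(1::real) gchoose (Suc (Suc k)) = 0"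
        using binomial_gbinomial[of 1 "Suc (Suc k)", where 'a=real] by simp
      then show ?thesis using \<open>n = Suc m\<close> Suc by (simp add: om_nth numeral_fps_const)
    qed
  qed
qed

lemma trinom: "((r::real) gchoose (n + k)) * of_nat ((n + k) choose k)
     = (r gchoose k) * ((r - of_nat k) gchoose n)"
proof (induction n)
  case 0 then show ?case by simp
next
  case (Suc n)
  have e1: "of_nat (Suc (n+k)) * (r gchoose Suc (n+k)) = (r - of_nat (n+k)) * (r gchoose (n+k))"
    using gbinomial_mult_1[of r "n+k"] by (simp add: algebra_simps)
  have e2: "of_nat (Suc n) * ((r - of_nat k) gchoose Suc n) = (r - of_nat k - of_nat n) * ((r - of_nat k) gchoose n)"
    using gbinomial_mult_1[of "r - of_nat k" n] by (simp add: algebra_simps)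
  have e3: "(Suc (n+k) choose k) * Suc n = ((n + k) choose k) * Suc (n+k)"
  proof -
    have "(Suc (n+k) - k) * (Suc (n+k) choose k) = Suc (n+k) * ((n+k) choose k)"
      using binomial_absorb_comp[of "Suc (n+k)" k] by simp
    moreover have "Suc (n+k) - k = Suc n" by simp
    ultimately show ?thesis by (simp only: mult.commute)
  qed
  have e3': "of_nat (Suc (n+k) choose k) * of_nat (Suc n) = (of_nat ((n+k) choose k) * of_nat (Suc (n+k)) :: real)"
    by (simp only: of_nat_mult[symmetric] e3)
  have "of_nat (Suc n) * ((r gchoose (Suc n + k)) * of_nat ((Suc n + k) choose k))
      = (r gchoose Suc (n + k)) * (of_nat (Suc (n+k) choose k) * of_nat (Suc n))" by (simp add: algebra_simps)
  also have "\<dots> = (r gchoose Suc (n + k)) * of_nat ((n + k) choose k) * of_nat (Suc (n+k))"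
    by (simp only: e3' mult.assoc)
  also have "\<dots> = (of_nat (Suc (n+k)) * (r gchoose Suc (n+k))) * of_nat ((n+k) choose k)"
    by (simp only: mult_ac)
  also have "\<dots> = (r - of_nat (n+k)) * (r gchoose (n+k)) * of_nat ((n+k) choose k)"
    by (simp only: e1)
  also have "\<dots> = (r - of_nat (n+k)) * ((r gchoose (n+k)) * of_nat ((n + k) choose k))"
    by (simp only: mult_ac)
  also have "\<dots> = (r - of_nat (n+k)) * ((r gchoose k) * ((r - of_nat k) gchoose n))"
    using Suc.IH by simp
  also have "\<dots> = (r gchoose k) * ((r - of_nat k - of_nat n) * ((r - of_nat k) gchoose n))"
    by (simp add: algebra_simps)
  also have "\<dots> = (r gchoose k) * (of_nat (Suc n) * ((r - of_nat k) gchoose Suc n))"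
    by (simp only: e2)
  finally have "of_nat (Suc n) * ((r gchoose (Suc n + k)) * of_nat ((Suc n + k) choose k))
      = of_nat (Suc n) * ((r gchoose k) * ((r - of_nat k) gchoose Suc n))" by (simp add: algebra_simps)
  then show ?case by (subst (asm) mult_left_cancel) simp_all
qed

definition H :: "nat \<Rightarrow> real fps \<Rightarrow> real fps" where
  "H k f = Abs_fps (\<lambda>n. of_nat ((n + k) choose k) * f $ (n + k))"

lemma H_nth: "H k f $ n = of_nat ((n + k) choose k) * f $ (n + k)"
  by (simp add: H_def)

lemma H_0[simp]: "H 0 f = f"
  by (rule fps_ext) (simp add: H_nth)

lemma H_add: "H k (f + g) = H k f + H k g"
  by (rule fps_ext) (simp add: H_nth algebra_simps)

lemma H_diff: "H k (f - g) = H k f - H k g"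
  by (rule fps_ext) (simp add: H_nth algebra_simps)

lemma H_uminus: "H k (- f) = - H k f"
  by (rule fps_ext) (simp add: H_nth algebra_simps)

lemma H_const_mult: "H k (fps_const c * f) = fps_const c * H k f"
  by (rule fps_ext) (simp add: H_nth algebra_simps)

lemma H_zero[simp]: "H k 0 = 0"
  by (rule fps_ext) (simp add: H_nth)

lemma H_sum: "H k (\<Sum>x\<in>A. f x) = (\<Sum>x\<in>A. H k (f x))"
  by (induction A rule: infinite_finite_induct) (simp_all add: H_add)

lemma H_const: "k > 0 \<Longrightarrow> H k (fps_const c) = 0"
  by (rule fps_ext) (simp add: H_nth)

lemma H_om: "H k (om r) = fps_const ((r gchoose k) * (-4)^k) * om (r - of_nat k)"
proof (rule fps_ext)
  fix n
  have "H k (om r) $ n = of_nat ((n + k) choose k) * ((r gchoose (n+k)) * (-4)^(n+k))"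
    by (simp add: H_nth om_nth)
  also have "\<dots> = ((r gchoose (n+k)) * of_nat ((n + k) choose k)) * (-4)^(n+k)"
    by (simp add: algebra_simps)
  also have "\<dots> = (r gchoose k) * ((r - of_nat k) gchoose n) * (-4)^(n+k)"
    by (simp only: trinom)
  also have "\<dots> = (fps_const ((r gchoose k) * (-4)^k) * om (r - of_nat k)) $ n"
    by (simp add: om_nth power_add algebra_simps)
  finally show "H k (om r) $ n = (fps_const ((r gchoose k) * (-4)^k) * om (r - of_nat k)) $ n" .
qed

lemma H_mult: "H k (f * g) = (\<Sum>a\<le>k. H a f * H (k - a) g)"
proof (rule fps_ext)
  fix n
  define F where "F x a = of_nat (x choose a) * of_nat ((n + k - x) choose (k - a)) * (f $ x * g $ (n + k - x))"
    for x a
  have "H k (f * g) $ n = of_nat ((n + k) choose k) * (\<Sum>x\<le>n+k. f $ x * g $ (n + k - x))"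
    by (simp add: H_nth fps_mult_nth atLeast0AtMost)
  also have "\<dots> = (\<Sum>x\<le>n+k. of_nat ((n + k) choose k) * (f $ x * g $ (n + k - x)))"
    by (simp add: sum_distrib_left)
  also have "\<dots> = (\<Sum>x\<le>n+k. \<Sum>a\<le>k. F x a)"
  proof (rule sum.cong[OF refl])
    fix x assume "x \<in> {..n+k}"
    then have "(\<Sum>a=0..k. (x choose a) * ((n + k - x) choose (k - a))) = (x + (n + k - x)) choose k"
      using binomial_Vandermonde[of x "n+k-x" k] by simp
    also have "x + (n + k - x) = n + k" using \<open>x \<in> {..n+k}\<close> by simp
    finally have "real ((n + k) choose k) = (\<Sum>a\<le>k. real (x choose a) * real ((n + k - x) choose (k - a)))"
      by (simp add: atLeast0AtMost flip: of_nat_mult of_nat_sum)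
    then show "of_nat ((n + k) choose k) * (f $ x * g $ (n + k - x)) = (\<Sum>a\<le>k. F x a)"
      by (simp add: F_def sum_distrib_right)
  qed
  also have "\<dots> = (\<Sum>a\<le>k. \<Sum>x\<le>n+k. F x a)"
    by (rule sum.swap)
  also have "\<dots> = (\<Sum>a\<le>k. \<Sum>p\<le>n. F (p + a) a)"
  proof (rule sum.cong[OF refl])
    fix a assume a: "a \<in> {..k}"
    have "(\<Sum>x\<le>n+k. F x a) = (\<Sum>x\<in>{a..n+a}. F x a)"
    proof (rule sum.mono_neutral_right)
      show "\<forall>x\<in>{..n + k} - {a..n + a}. F x a = 0"
      proof
        fix x assume x: "x \<in> {..n + k} - {a..n + a}"
        then have "x < a \<or> x > n + a" by auto
        then show "F x a = 0"
        proof
          assume "x < a" then show ?thesis by (simp add: F_def)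
        next
          assume "x > n + a" then have "n + k - x < k - a" using a x by auto
          then show ?thesis by (simp add: F_def)
        qed
      qed
    qed (use a in auto)
    also have "\<dots> = (\<Sum>p\<le>n. F (p + a) a)"
    proof -
      have "{a..n+a} = (\<lambda>p. p + a) ` {..n}"
      proof (auto simp: image_iff)
        fix x assume "a \<le> x" "x \<le> n + a"
        then show "\<exists>p\<in>{..n}. x = p + a" by (intro bexI[of _ "x - a"]) auto
      qed
      then show ?thesis by (simp add: sum.reindex)
    qed
    finally show "(\<Sum>x\<le>n+k. F x a) = (\<Sum>p\<le>n. F (p + a) a)" .
  qed
  also have "\<dots> = (\<Sum>a\<le>k. H a f * H (k - a) g) $ n"
  proof -
    have "(\<Sum>a\<le>k. H a f * H (k - a) g) $ n = (\<Sum>a\<le>k. (H a f * H (k - a) g) $ n)"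
      by (simp add: fps_sum_nth)
    also have "\<dots> = (\<Sum>a\<le>k. \<Sum>p\<le>n. F (p + a) a)"
    proof (rule sum.cong[OF refl])
      fix a assume a: "a \<in> {..k}"
      show "(H a f * H (k - a) g) $ n = (\<Sum>p\<le>n. F (p + a) a)"
        unfolding fps_mult_nth atLeast0AtMost
      proof (rule sum.cong[OF refl])
        fix p assume p: "p \<in> {..n}"
        have e: "n - p + (k - a) = n + k - (p + a)" using a p by auto
        have e2: "k - a + (n - p) = k + n - (a + p)" using a p by auto
        show "H a f $ p * H (k - a) g $ (n - p) = F (p + a) a"
          by (simp add: H_nth F_def e e2 add.commute)
      qed
    qed
    finally show ?thesis by simp
  qed
  finally show "H k (f * g) $ n = (\<Sum>a\<le>k. H a f * H (k - a) g) $ n" .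
qed

definition s :: "real fps" where "s = om (1/2)"
definition t :: "real fps" where "t = om (-1/2)"

lemma om_nat: "om (of_nat m) = (1 - 4 * fps_X) ^ m"
proof (induction m)
  case 0 then show ?case by (simp add: om_0)
next
  case (Suc m)
  have "om (of_nat (Suc m)) = om 1 * om (of_nat m)" by (simp add: om_add add.commute)
  then show ?case using Suc by (simp add: om_1)
qed

lemma om_shift: "om (r + of_nat m) = (1 - 4 * fps_X) ^ m * om r"
  by (simp add: om_add[symmetric] om_nat mult.commute)

lemma om_inv: "om r * om (- r) = 1"
  by (simp add: om_add om_0)

lemma s_sq: "s * s = 1 - 4 * fps_X"
  unfolding s_def by (simp add: om_add om_1)

lemma s_t: "s * t = 1"
  unfolding s_def t_def by (simp add: om_add om_0)

lemma om_half: "om (r + 1/2) = s * om r"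
  unfolding s_def by (simp add: om_add add.commute)

lemma om_mhalf: "om (r - 1/2) = t * om r"
  unfolding t_def by (simp add: om_add add.commute)

lemma om_half_nat: "om (of_nat k / 2) = s ^ k"
proof (induction k)
  case 0 then show ?case by (simp add: om_0)
next
  case (Suc k)
  have "om (of_nat (Suc k) / 2) = om (of_nat k / 2 + 1/2)" by (simp add: add_divide_distrib add.commute)
  then show ?case using Suc by (simp add: om_half)
qed

lemma om_mhalf_nat: "om (- (of_nat k / 2)) = t ^ k"
proof (induction k)
  case 0 then show ?case by (simp add: om_0)
next
  case (Suc k)
  have "om (- (of_nat (Suc k) / 2)) = om (- (of_nat k / 2) - 1/2)"
    by (rule arg_cong[where f=om]) (simp add: field_simps)
  then show ?case using Suc by (simp add: om_mhalf)
qed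

definition intfps :: "real fps \<Rightarrow> bool" where "intfps f \<longleftrightarrow> (\<forall>n. f $ n \<in> \<int>)"

lemma intfps_add: "intfps f \<Longrightarrow> intfps g \<Longrightarrow> intfps (f + g)"
  by (simp add: intfps_def)

lemma intfps_mult: "intfps f \<Longrightarrow> intfps g \<Longrightarrow> intfps (f * g)"
  unfolding intfps_def fps_mult_nth by (auto intro!: Ints_sum)

lemma intfps_1: "intfps 1"
  by (simp add: intfps_def)

lemma intfps_power: "intfps f \<Longrightarrow> intfps (f ^ k)"
  by (induction k) (simp_all add: intfps_1 intfps_mult)

lemma intfps_1m4X: "intfps (1 - 4 * fps_X)"
  unfolding intfps_def by (auto simp: numeral_fps_const)

lemma central_binom_rec: "Suc n * ((2 * Suc n) choose Suc n) = 2 * (2 * n + 1) * ((2 * n) choose n)"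
proof -
  have a: "(Suc (2 * n + 1)) * ((2 * n + 1) choose n) = (Suc (2 * n + 1) choose Suc n) * Suc n"
    by (rule Suc_times_binomial_eq)
  have b: "(Suc (2 * n) - n) * (Suc (2 * n) choose n) = Suc (2 * n) * ((2 * n) choose n)"
    using binomial_absorb_comp[of "Suc (2*n)" n] by simp
  have b': "Suc n * ((2 * n + 1) choose n) = (2 * n + 1) * ((2 * n) choose n)"
    using b by (simp del: binomial_Suc_Suc add: Suc_diff_le)
  have "((Suc (2 * n + 1)) choose Suc n) * Suc n = 2 * (Suc n * ((2 * n + 1) choose n))"
    using a by (simp del: binomial_Suc_Suc)
  also have "\<dots> = 2 * ((2 * n + 1) * ((2 * n) choose n))" by (simp only: b')
  finally have "((Suc (2 * n + 1)) choose Suc n) * Suc n = 2 * ((2 * n + 1) * ((2 * n) choose n))" .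
  moreover have "Suc (2 * n + 1) = 2 * Suc n" by simp
  ultimately show ?thesis by (simp del: binomial_Suc_Suc add: mult.commute mult.left_commute)
qed

lemma t_nth: "t $ n = of_nat ((2 * n) choose n)"
proof (induction n)
  case 0 then show ?case by (simp add: t_def om_nth)
next
  case (Suc n)
  have g: "of_nat (Suc n) * ((-1/2::real) gchoose Suc n) = (-1/2 - of_nat n) * ((-1/2) gchoose n)"
    using gbinomial_mult_1[of "-1/2::real" n] by (simp add: algebra_simps)
  have "of_nat (Suc n) * t $ Suc n = (-1/2 - of_nat n) * ((-1/2) gchoose n) * (-4)^(Suc n)"
    unfolding t_def om_nth using g by (simp only: mult.assoc[symmetric])
  also have "\<dots> = 2 * (2 * of_nat n + 1) * t $ n"
    unfolding t_def om_nth by (simp add: algebra_simps)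
  also have "\<dots> = of_nat (Suc n) * of_nat ((2 * Suc n) choose Suc n)"
  proof -
    have "real (Suc n * ((2 * Suc n) choose Suc n)) = real (2 * (2 * n + 1) * ((2 * n) choose n))"
      by (simp only: central_binom_rec)
    then show ?thesis using Suc by (simp del: binomial_Suc_Suc add: algebra_simps)
  qed
  finally show ?case by (subst (asm) mult_left_cancel) simp_all
qed

lemma intfps_t: "intfps t"
  by (simp add: intfps_def t_nth)

lemma s_eq: "s = (1 - 4 * fps_X) * t"
  unfolding s_def t_def by (simp add: om_1[symmetric] om_add)

lemma intfps_s: "intfps s"
  by (simp add: s_eq intfps_mult intfps_t intfps_1m4X)

lemma intfps_om: "intfps (om (of_int d / 2))"
proof (cases "d \<ge> 0")
  case True
  then have "om (of_int d / 2) = s ^ nat d"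
    using om_half_nat[of "nat d"] by simp
  then show ?thesis by (simp add: intfps_power intfps_s)
next
  case False
  then have "om (of_int d / 2) = t ^ nat (- d)"
    using om_mhalf_nat[of "nat (-d)"] by simp
  then show ?thesis by (simp add: intfps_power intfps_t)
qed

lemma om_int_nth: "om (of_int d / 2) $ n \<in> \<int>"
  using intfps_om unfolding intfps_def by blast

definition intpoly :: "real poly \<Rightarrow> bool" where "intpoly p \<longleftrightarrow> (\<forall>n. coeff p n \<in> \<int>)"

lemma intpoly_0[simp]: "intpoly 0" by (simp add: intpoly_def)
lemma intpoly_1[simp]: "intpoly 1" by (simp add: intpoly_def coeff_1)
lemma intpoly_add: "intpoly p \<Longrightarrow> intpoly q \<Longrightarrow> intpoly (p + q)"
  by (simp add: intpoly_def)
lemma intpoly_diff: "intpoly p \<Longrightarrow> intpoly q \<Longrightarrow> intpoly (p - q)"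
  by (simp add: intpoly_def)
lemma intpoly_uminus: "intpoly p \<Longrightarrow> intpoly (- p)"
  by (simp add: intpoly_def)
lemma intpoly_mult: "intpoly p \<Longrightarrow> intpoly q \<Longrightarrow> intpoly (p * q)"
  unfolding intpoly_def coeff_mult by (auto intro!: Ints_sum)
lemma intpoly_smult: "c \<in> \<int> \<Longrightarrow> intpoly p \<Longrightarrow> intpoly (smult c p)"
  by (simp add: intpoly_def)
lemma intpoly_power: "intpoly p \<Longrightarrow> intpoly (p ^ k)"
  by (induction k) (simp_all add: intpoly_mult)
lemma intpoly_sum: "(\<And>x. x \<in> A \<Longrightarrow> intpoly (f x)) \<Longrightarrow> intpoly (\<Sum>x\<in>A. f x)"
  by (induction A rule: infinite_finite_induct) (simp_all add: intpoly_add)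
lemma intpoly_lin: "intpoly [:1, -4:]"
  by (simp add: intpoly_def coeff_pCons split: nat.split)
lemma intpoly_pCons: "c \<in> \<int> \<Longrightarrow> intpoly p \<Longrightarrow> intpoly (pCons c p)"
  by (simp add: intpoly_def coeff_pCons split: nat.split)

lemma fps_of_poly_lin: "fps_of_poly [:1, -4:] = (1 - 4 * fps_X :: real fps)"
  by (simp add: fps_of_poly_pCons fps_of_poly_const numeral_fps_const)

definition Hp :: "nat \<Rightarrow> real poly \<Rightarrow> real poly" where
  "Hp k A = (\<Sum>n\<le>degree A. monom (of_nat ((n + k) choose k) * coeff A (n + k)) n)"

lemma coeff_Hp: "coeff (Hp k A) m = of_nat ((m + k) choose k) * coeff A (m + k)"
proof (cases "m \<le> degree A")
  case True
  then show ?thesis by (simp add: Hp_def coeff_sum coeff_monom)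
next
  case False
  then have "coeff A (m + k) = 0" by (simp add: coeff_eq_0)
  then show ?thesis using False by (simp add: Hp_def coeff_sum coeff_monom)
qed

lemma fps_of_poly_Hp: "fps_of_poly (Hp k A) = H k (fps_of_poly A)"
  by (rule fps_ext) (simp add: coeff_Hp H_nth)

lemma intpoly_Hp: "intpoly A \<Longrightarrow> intpoly (Hp k A)"
  by (simp add: intpoly_def coeff_Hp)

lemma H_poly_om: "H k (fps_of_poly A * om r)
   = fps_of_poly (\<Sum>j\<le>k. smult (om r $ (k - j)) (Hp j A * [:1, -4:] ^ j)) * om (r - of_nat k)"
proof -
  have "H k (fps_of_poly A * om r) = (\<Sum>j\<le>k. H j (fps_of_poly A) * H (k - j) (om r))"
    by (rule H_mult)
  also have "\<dots> = (\<Sum>j\<le>k. fps_of_poly (smult (om r $ (k - j)) (Hp j A * [:1, -4:] ^ j)) * om (r - of_nat k))"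
  proof (rule sum.cong[OF refl])
    fix j assume j: "j \<in> {..k}"
    have "om (r - of_nat (k - j)) = om ((r - of_nat k) + of_nat j)"
      by (rule arg_cong[where f=om]) (use j in \<open>simp add: of_nat_diff\<close>)
    also have "\<dots> = (1 - 4 * fps_X) ^ j * om (r - of_nat k)" by (rule om_shift)
    finally have e: "om (r - of_nat (k - j)) = (1 - 4 * fps_X) ^ j * om (r - of_nat k)" .
    show "H j (fps_of_poly A) * H (k - j) (om r) = fps_of_poly (smult (om r $ (k - j)) (Hp j A * [:1, -4:] ^ j)) * om (r - of_nat k)"
      by (simp add: H_om e fps_of_poly_Hp fps_of_poly_smult fps_of_poly_mult fps_of_poly_power fps_of_poly_lin om_nth algebra_simps)
  qed
  also have "\<dots> = fps_of_poly (\<Sum>j\<le>k. smult (om r $ (k - j)) (Hp j A * [:1, -4:] ^ j)) * om (r - of_nat k)"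
    by (simp add: fps_of_poly_sum sum_distrib_right)
  finally show ?thesis .
qed

definition C :: "int \<Rightarrow> real fps \<Rightarrow> bool" where
  "C d f \<longleftrightarrow> (\<exists>Q S. intpoly Q \<and> intpoly S \<and>
      f = fps_of_poly S * om (of_int d / 2) + fps_of_poly Q * om ((of_int d + 1) / 2))"

lemma C_0: "C d 0"
  unfolding C_def by (rule exI[of _ 0], rule exI[of _ 0]) simp

lemma C_add: "C d f \<Longrightarrow> C d g \<Longrightarrow> C d (f + g)"
proof -
  assume "C d f" "C d g"
  then obtain Q S Q' S' where *: "intpoly Q" "intpoly S" "intpoly Q'" "intpoly S'"
    "f = fps_of_poly S * om (of_int d / 2) + fps_of_poly Q * om ((of_int d + 1) / 2)"
    "g = fps_of_poly S' * om (of_int d / 2) + fps_of_poly Q' * om ((of_int d + 1) / 2)"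
    unfolding C_def by blast
  show ?thesis unfolding C_def
    by (rule exI[of _ "Q + Q'"], rule exI[of _ "S + S'"]) (simp add: * intpoly_add fps_of_poly_add algebra_simps)
qed

lemma C_sum: "(\<And>x. x \<in> A \<Longrightarrow> C d (f x)) \<Longrightarrow> C d (\<Sum>x\<in>A. f x)"
  by (induction A rule: infinite_finite_induct) (simp_all add: C_0 C_add)

lemma C_smult: "c \<in> \<int> \<Longrightarrow> C d f \<Longrightarrow> C d (fps_const c * f)"
proof -
  assume c: "c \<in> \<int>" and "C d f"
  then obtain Q S where *: "intpoly Q" "intpoly S"
    "f = fps_of_poly S * om (of_int d / 2) + fps_of_poly Q * om ((of_int d + 1) / 2)"
    unfolding C_def by blast
  show ?thesis unfolding C_def
    by (rule exI[of _ "smult c Q"], rule exI[of _ "smult c S"]) (simp add: * c intpoly_smult fps_of_poly_smult algebra_simps)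
qed

lemma intpoly_const: "c \<in> \<int> \<Longrightarrow> intpoly [:c:]"
  by (auto simp: intpoly_def coeff_pCons split: nat.split)

lemma C_om: "c \<in> \<int> \<Longrightarrow> C d (fps_const c * om (of_int d / 2))"
  unfolding C_def
  by (rule exI[of _ 0], rule exI[of _ "[:c:]"]) (simp add: intpoly_const fps_of_poly_const)

lemma C_mono1: "C (d + 1) f \<Longrightarrow> C d f"
proof -
  assume "C (d + 1) f"
  then obtain Q S where *: "intpoly Q" "intpoly S"
      "f = fps_of_poly S * om (real_of_int (d + 1) / 2) + fps_of_poly Q * om ((real_of_int (d + 1) + 1) / 2)"
    unfolding C_def by blast
  have e1: "om ((real_of_int (d + 1) + 1) / 2) = (1 - 4 * fps_X) * om (of_int d / 2)"
  proof -
    have "om ((real_of_int (d + 1) + 1) / 2) = om (of_int d / 2 + of_nat 1)"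
      by (rule arg_cong[where f=om]) (simp add: field_simps)
    then show ?thesis by (simp only: om_shift) simp
  qed
  have e2: "real_of_int (d + 1) / 2 = (of_int d + 1) / 2" by simp
  have eq: "f = fps_of_poly (Q * [:1, -4:]) * om (real_of_int d / 2) + fps_of_poly S * om ((real_of_int d + 1) / 2)"
    unfolding *(3) e1 e2 fps_of_poly_mult fps_of_poly_lin by (simp add: algebra_simps)
  show ?thesis unfolding C_def
    by (rule exI[of _ S], rule exI[of _ "Q * [:1, -4:]"]) (simp only: eq *(1,2) intpoly_mult intpoly_lin simp_thms)
qed

lemma C_mono_aux: "C (d + int n) f \<Longrightarrow> C d f"
proof (induction n)
  case 0 then show ?case by simp
next
  case (Suc n)
  then have "C ((d + int n) + 1) f" by (simp add: ac_simps)
  then show ?case using C_mono1 Suc.IH by blast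
qed

lemma C_mono: "d \<le> d' \<Longrightarrow> C d' f \<Longrightarrow> C d f"
  using C_mono_aux[of d "nat (d' - d)"] by simp

lemma C_t: "C d f \<Longrightarrow> C (d - 1) (t * f)"
proof -
  assume "C d f"
  then obtain Q S where *: "intpoly Q" "intpoly S"
      "f = fps_of_poly S * om (real_of_int d / 2) + fps_of_poly Q * om ((real_of_int d + 1) / 2)"
    unfolding C_def by blast
  have e1: "t * om (real_of_int d / 2) = om (real_of_int (d - 1) / 2)"
  proof -
    have "om (real_of_int (d - 1) / 2) = om (real_of_int d / 2 - 1/2)"
      by (rule arg_cong[where f=om]) (simp add: field_simps)
    then show ?thesis by (simp add: om_mhalf)
  qed
  have e2: "t * om ((real_of_int d + 1) / 2) = om ((real_of_int (d - 1) + 1) / 2)"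
  proof -
    have "om ((real_of_int (d - 1) + 1) / 2) = om ((real_of_int d + 1) / 2 - 1/2)"
      by (rule arg_cong[where f=om]) (simp add: field_simps)
    then show ?thesis by (simp add: om_mhalf)
  qed
  have eq: "t * f = fps_of_poly S * om (real_of_int (d - 1) / 2) + fps_of_poly Q * om ((real_of_int (d - 1) + 1) / 2)"
    unfolding *(3) e1[symmetric] e2[symmetric] by (simp add: algebra_simps)
  show ?thesis unfolding C_def by (rule exI[of _ Q], rule exI[of _ S]) (simp only: eq *(1,2) simp_thms)
qed

lemma C_mult: "C d1 f \<Longrightarrow> C d2 g \<Longrightarrow> C (d1 + d2) (f * g)"
proof -
  assume "C d1 f" "C d2 g"
  then obtain Q1 S1 Q2 S2 where *: "intpoly Q1" "intpoly S1" "intpoly Q2" "intpoly S2"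
      "f = fps_of_poly S1 * om (real_of_int d1 / 2) + fps_of_poly Q1 * om ((real_of_int d1 + 1) / 2)"
      "g = fps_of_poly S2 * om (real_of_int d2 / 2) + fps_of_poly Q2 * om ((real_of_int d2 + 1) / 2)"
    unfolding C_def by blast
  let ?o = "om (real_of_int (d1 + d2) / 2)"
  let ?o' = "om ((real_of_int (d1 + d2) + 1) / 2)"
  have e1: "om (real_of_int d1 / 2) * om (real_of_int d2 / 2) = ?o"
    by (subst om_add, rule arg_cong[where f=om]) (simp add: field_simps)
  have e2: "om (real_of_int d1 / 2) * om ((real_of_int d2 + 1) / 2) = ?o'"
    by (subst om_add, rule arg_cong[where f=om]) (simp add: field_simps)
  have e3: "om ((real_of_int d1 + 1) / 2) * om (real_of_int d2 / 2) = ?o'"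
    by (subst om_add, rule arg_cong[where f=om]) (simp add: field_simps)
  have e4: "om ((real_of_int d1 + 1) / 2) * om ((real_of_int d2 + 1) / 2) = (1 - 4 * fps_X) * ?o"
  proof -
    have "om ((real_of_int d1 + 1) / 2) * om ((real_of_int d2 + 1) / 2) = om (real_of_int (d1 + d2) / 2 + of_nat 1)"
      by (subst om_add, rule arg_cong[where f=om]) (simp add: field_simps)
    then show ?thesis by (simp only: om_shift) simp
  qed
  have "f * g = fps_of_poly S1 * fps_of_poly S2 * (om (real_of_int d1 / 2) * om (real_of_int d2 / 2))
     + fps_of_poly S1 * fps_of_poly Q2 * (om (real_of_int d1 / 2) * om ((real_of_int d2 + 1) / 2))
     + fps_of_poly Q1 * fps_of_poly S2 * (om ((real_of_int d1 + 1) / 2) * om (real_of_int d2 / 2))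
     + fps_of_poly Q1 * fps_of_poly Q2 * (om ((real_of_int d1 + 1) / 2) * om ((real_of_int d2 + 1) / 2))"
    unfolding *(5,6) by (simp add: algebra_simps)
  also have "\<dots> = fps_of_poly (S1 * S2 + Q1 * Q2 * [:1, -4:]) * ?o + fps_of_poly (S1 * Q2 + Q1 * S2) * ?o'"
    unfolding e1 e2 e3 e4 fps_of_poly_add fps_of_poly_mult fps_of_poly_lin by (simp add: algebra_simps)
  finally have eq: "f * g = fps_of_poly (S1 * S2 + Q1 * Q2 * [:1, -4:]) * ?o + fps_of_poly (S1 * Q2 + Q1 * S2) * ?o'" .
  show ?thesis unfolding C_def
    by (rule exI[of _ "S1 * Q2 + Q1 * S2"], rule exI[of _ "S1 * S2 + Q1 * Q2 * [:1, -4:]"])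
       (simp only: eq *(1-4) intpoly_mult intpoly_add intpoly_lin simp_thms)
qed

lemma C_H_poly: "intpoly A \<Longrightarrow> of_int e = 2 * r \<Longrightarrow>
   C (e - 2 * int k) (H k (fps_of_poly A * om r))"
proof -
  assume A: "intpoly A" and r: "of_int e = 2 * r"
  let ?B = "\<Sum>j\<le>k. smult (om r $ (k - j)) (Hp j A * [:1, -4:] ^ j)"
  have iB: "intpoly ?B"
  proof (rule intpoly_sum)
    fix j
    have "om r $ (k - j) \<in> \<int>" using om_int_nth[of e "k - j"] r by simp
    then show "intpoly (smult (om r $ (k - j)) (Hp j A * [:1, -4:] ^ j))"
      by (intro intpoly_smult intpoly_mult intpoly_Hp intpoly_power A intpoly_lin)
  qed
  have rk: "r - of_nat k = of_int (e - 2 * int k) / 2" using r by simp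
  show ?thesis unfolding H_poly_om C_def rk
    by (rule exI[of _ 0], rule exI[of _ ?B]) (simp only: iB intpoly_0 fps_of_poly_0 mult_zero_left add_0_right simp_thms)
qed

lemma C_H: "C d f \<Longrightarrow> C (d - 2 * int k) (H k f)"
proof -
  assume "C d f"
  then obtain Q S where *: "intpoly Q" "intpoly S"
      "f = fps_of_poly S * om (of_int d / 2) + fps_of_poly Q * om ((of_int d + 1) / 2)"
    unfolding C_def by blast
  have "C (d - 2 * int k) (H k (fps_of_poly S * om (of_int d / 2)))"
    by (rule C_H_poly) (simp_all add: *)
  moreover have "C ((d + 1) - 2 * int k) (H k (fps_of_poly Q * om ((of_int d + 1) / 2)))"
    by (rule C_H_poly) (simp_all add: *)
  then have "C (d - 2 * int k) (H k (fps_of_poly Q * om ((of_int d + 1) / 2)))"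
    by (rule C_mono[rotated]) simp
  ultimately show ?thesis unfolding *(3) H_add by (rule C_add)
qed

lemma degree_P: "degree (P n) \<le> n + 1"
proof (induction n rule: less_induct)
  case (less n)
  show ?case
  proof (cases n)
    case 0 then show ?thesis by simp
  next
    case (Suc m)
    have d1: "degree (pcompose (P m) [:1,1:]) \<le> m + 1"
      using degree_pcompose_le[of "P m" "[:1,1:]"] less[of m] Suc by simp
    have d2: "degree (\<Sum>i\<le>m. P i * P (m - i)) \<le> m + 2"
    proof (rule degree_sum_le)
      fix i assume i: "i \<in> {..m}"
      have "degree (P i * P (m - i)) \<le> degree (P i) + degree (P (m - i))" by (rule degree_mult_le)
      also have "\<dots> \<le> (i + 1) + (m - i + 1)" using less[of i] less[of "m - i"] Suc i
        by (intro add_mono) auto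
      also have "\<dots> = m + 2" using i by simp
      finally show "degree (P i * P (m - i)) \<le> m + 2" .
    qed simp
    show ?thesis using Suc degree_add_le[OF order_trans[OF d1] d2] by simp
  qed
qed

lemma coeff_P_high: "n + 2 \<le> k \<Longrightarrow> coeff (P n) k = 0"
  by (rule coeff_eq_0) (use degree_P[of n] in simp)

lemma coeff_P_nz: "coeff (P n) k \<noteq> 0 \<Longrightarrow> k \<le> n + 1"
  by (rule ccontr) (simp add: coeff_P_high)

lemma coeff_lin_pow: "coeff ([:1, 1:] ^ m) k = (of_nat (m choose k) :: 'a :: comm_ring_1)"
proof (cases "k \<le> m")
  case True then show ?thesis by (simp add: coeff_linear_poly_power)
next
  case False
  have "degree ([:1, 1::'a:] ^ m) \<le> m" using degree_power_le[of "[:1, 1::'a:]" m] by simp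
  then show ?thesis using False by (simp add: coeff_eq_0 binomial_eq_0)
qed

lemma coeff_pcomp:
  fixes p :: "int poly"
  assumes "degree p \<le> D"
  shows "coeff (pcompose p [:1, 1:]) k = (\<Sum>m\<le>D. coeff p m * of_nat (m choose k))"
proof -
  have dm: "degree (map_poly (\<lambda>x. [:x:]) p) = degree p"
    by (rule degree_map_poly) simp
  have "pcompose p [:1, 1:] = (\<Sum>m\<le>degree p. smult (coeff p m) ([:1, 1:] ^ m))"
    unfolding pcompose_altdef poly_altdef dm
    by (rule sum.cong[OF refl]) (simp add: coeff_map_poly)
  then have "coeff (pcompose p [:1, 1:]) k = (\<Sum>m\<le>degree p. coeff p m * of_nat (m choose k))"
    by (simp add: coeff_sum coeff_lin_pow)
  also have "\<dots> = (\<Sum>m\<le>D. coeff p m * of_nat (m choose k))"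
    by (rule sum.mono_neutral_left) (use assms in \<open>auto simp: coeff_eq_0\<close>)
  finally show ?thesis .
qed

definition bb :: "nat \<Rightarrow> real fps" where
  "bb j = Abs_fps (\<lambda>m. if 2 \<le> m + j then of_int (pc j (m + j - 2)) else 0)"

lemma bb_P: "1 \<le> j \<Longrightarrow> 2 \<le> m + j \<Longrightarrow> bb j $ m = of_int (coeff (P (m + j - 2)) m)"
proof -
  assume "1 \<le> j" "2 \<le> m + j"
  then have "m + j - 2 + 2 = m + j" by simp
  then show ?thesis using \<open>1 \<le> j\<close> \<open>2 \<le> m + j\<close> by (simp add: bb_def pc_def)
qed

lemma bb_zero: "m + j < 2 \<Longrightarrow> bb j $ m = 0"
  by (simp add: bb_def)

lemma bb_nz: "bb j $ m \<noteq> 0 \<Longrightarrow> 2 \<le> m + j"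
  by (rule ccontr) (simp add: bb_zero)

lemma a_bb: "2 \<le> i \<Longrightarrow> a i = fps_X ^ (i - 2) * bb i"
proof (rule fps_ext)
  fix n assume i: "2 \<le> i"
  show "a i $ n = (fps_X ^ (i - 2) * bb i) $ n"
  proof (cases "n < i - 2")
    case True then show ?thesis by (auto simp: a_def pc_def fps_X_power_mult_nth)
  next
    case False
    then have "n - (i - 2) + i - 2 = n" "2 \<le> n - (i - 2) + i" using i by auto
    then show ?thesis using False by (simp add: a_def bb_def fps_X_power_mult_nth)
  qed
qed

lemma inner_x:
  assumes i: "1 \<le> i" and N: "N + 3 = n + i" and x: "x \<le> n"
  shows "(\<Sum>k\<le>N. of_int (coeff (P k) x) * of_int (coeff (P (N - k)) (n - x)) :: real)
       = (\<Sum>j\<in>{1..i}. bb j $ x * bb (i + 1 - j) $ (n - x))"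
proof -
  define A where "A = {k. k \<le> N \<and> x \<le> k + 1 \<and> n - x \<le> N - k + 1}"
  define B where "B = {j. 1 \<le> j \<and> j \<le> i \<and> 2 \<le> x + j \<and> 2 \<le> n - x + (i + 1 - j)}"
  have "(\<Sum>k\<le>N. of_int (coeff (P k) x) * of_int (coeff (P (N - k)) (n - x)) :: real)
      = (\<Sum>k\<in>A. of_int (coeff (P k) x) * of_int (coeff (P (N - k)) (n - x)))"
  proof (rule sum.mono_neutral_right)
    show "\<forall>k\<in>{..N} - A. (of_int (coeff (P k) x) * of_int (coeff (P (N - k)) (n - x)) :: real) = 0"
      by (auto simp: A_def dest: coeff_P_nz)
  qed (auto simp: A_def)
  also have "\<dots> = (\<Sum>j\<in>B. bb j $ x * bb (i + 1 - j) $ (n - x))"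
  proof (rule sum.reindex_bij_witness[where j = "\<lambda>k. k + 2 - x" and i = "\<lambda>j. j + x - 2"])
    fix k assume k: "k \<in> A"
    show "k + 2 - x + x - 2 = k" using k by (auto simp: A_def)
    show "k + 2 - x \<in> B" using k N x by (auto simp: B_def A_def)
    have e1: "x + (k + 2 - x) - 2 = k" using k by (auto simp: A_def)
    have e2: "n - x + (i + 1 - (k + 2 - x)) - 2 = N - k" using k N x by (auto simp: A_def)
    show "bb (k + 2 - x) $ x * bb (i + 1 - (k + 2 - x)) $ (n - x)
        = of_int (coeff (P k) x) * of_int (coeff (P (N - k)) (n - x))"
    proof -
      have c1: "1 \<le> k + 2 - x" "2 \<le> x + (k + 2 - x)" using k by (auto simp: A_def)
      have c2: "1 \<le> i + 1 - (k + 2 - x)" "2 \<le> n - x + (i + 1 - (k + 2 - x))" using k N x by (auto simp: A_def)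
      have b1: "bb (k + 2 - x) $ x = of_int (coeff (P k) x)"
        using bb_P[OF c1] unfolding e1 .
      have b2: "bb (i + 1 - (k + 2 - x)) $ (n - x) = of_int (coeff (P (N - k)) (n - x))"
        using bb_P[OF c2] unfolding e2 .
      show ?thesis by (simp only: b1 b2)
    qed
  next
    fix j assume j: "j \<in> B"
    show "j + x - 2 + 2 - x = j" using j by (auto simp: B_def)
    show "j + x - 2 \<in> A" using j N x by (auto simp: B_def A_def)
  qed
  also have "\<dots> = (\<Sum>j\<in>{1..i}. bb j $ x * bb (i + 1 - j) $ (n - x))"
  proof (rule sum.mono_neutral_left)
    show "\<forall>j\<in>{1..i} - B. bb j $ x * bb (i + 1 - j) $ (n - x) = 0"
      by (auto simp: B_def dest!: bb_nz)
  qed (auto simp: B_def)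
  finally show ?thesis .
qed

lemma first_part:
  assumes i: "1 \<le> i" and N: "N + 3 = n + i"
  shows "(of_int (coeff (pcompose (P N) [:1,1:]) n) :: real) = (\<Sum>j\<in>{1..<i}. H (i - 1 - j) (bb j)) $ n"
proof -
  have "(of_int (coeff (pcompose (P N) [:1,1:]) n) :: real)
      = (\<Sum>m\<le>N + 1. of_int (coeff (P N) m) * of_nat (m choose n))"
    by (simp add: coeff_pcomp[OF degree_P])
  also have "\<dots> = (\<Sum>m\<in>{n..N+1}. of_int (coeff (P N) m) * of_nat (m choose n))"
    by (rule sum.mono_neutral_right) auto
  also have "\<dots> = (\<Sum>j\<in>{1..<i}. of_nat ((n + (i - 1 - j)) choose (i - 1 - j)) * bb j $ (n + (i - 1 - j)))"
  proof (rule sum.reindex_bij_witness[where j = "\<lambda>m. n + i - 1 - m" and i = "\<lambda>j. n + i - 1 - j"])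
    fix m assume m: "m \<in> {n..N+1}"
    show "n + i - 1 - (n + i - 1 - m) = m" using m N by auto
    show "n + i - 1 - m \<in> {1..<i}" using m N by auto
    have e1: "n + (i - 1 - (n + i - 1 - m)) = m" using m N by auto
    have e2: "i - 1 - (n + i - 1 - m) = m - n" using m N by auto
    have e3: "m + (n + i - 1 - m) - 2 = N" using m N by auto
    have "bb (n + i - 1 - m) $ m = of_int (coeff (P N) m)"
      using bb_P[of "n + i - 1 - m" m] m N e3 by auto
    moreover have "m choose (m - n) = m choose n" using m by (simp add: binomial_symmetric[symmetric])
    ultimately show "of_nat ((n + (i - 1 - (n + i - 1 - m))) choose (i - 1 - (n + i - 1 - m))) * bb (n + i - 1 - m) $ (n + (i - 1 - (n + i - 1 - m)))
        = of_int (coeff (P N) m) * of_nat (m choose n)"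
      unfolding e1 unfolding e2 by simp
  next
    fix j assume j: "j \<in> {1..<i}"
    show "n + i - 1 - (n + i - 1 - j) = j" using j by auto
    show "n + i - 1 - j \<in> {n..N+1}" using j N by auto
  qed
  also have "\<dots> = (\<Sum>j\<in>{1..<i}. H (i - 1 - j) (bb j)) $ n"
    by (simp add: fps_sum_nth H_nth)
  finally show ?thesis .
qed

lemma bb_rec_nth:
  assumes i: "1 \<le> i" and n: "3 \<le> n + i"
  shows "bb i $ n = (\<Sum>j\<in>{1..<i}. H (i - 1 - j) (bb j)) $ n + (\<Sum>j\<in>{1..i}. bb j * bb (i + 1 - j)) $ n"
proof -
  define N where "N = n + i - 3"
  have N: "N + 3 = n + i" using n by (simp add: N_def)
  have e: "n + i - 2 = Suc N" using n by (simp add: N_def)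
  have "bb i $ n = of_int (coeff (P (Suc N)) n)" using bb_P[of i n] i n e by simp
  also have "\<dots> = of_int (coeff (pcompose (P N) [:1,1:]) n) + (\<Sum>k\<le>N. of_int (coeff (P k * P (N - k)) n))"
    by (simp add: coeff_sum)
  also have "(\<Sum>k\<le>N. of_int (coeff (P k * P (N - k)) n)) = (\<Sum>j\<in>{1..i}. bb j * bb (i + 1 - j)) $ n"
  proof -
    have "(\<Sum>k\<le>N. (of_int (coeff (P k * P (N - k)) n) :: real))
        = (\<Sum>k\<le>N. \<Sum>x\<le>n. of_int (coeff (P k) x) * of_int (coeff (P (N - k)) (n - x)))"
      by (simp add: coeff_mult)
    also have "\<dots> = (\<Sum>x\<le>n. \<Sum>k\<le>N. of_int (coeff (P k) x) * of_int (coeff (P (N - k)) (n - x)))"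
      by (rule sum.swap)
    also have "\<dots> = (\<Sum>x\<le>n. \<Sum>j\<in>{1..i}. bb j $ x * bb (i + 1 - j) $ (n - x))"
      by (rule sum.cong[OF refl]) (rule inner_x[OF i N], simp)
    also have "\<dots> = (\<Sum>j\<in>{1..i}. \<Sum>x\<le>n. bb j $ x * bb (i + 1 - j) $ (n - x))"
      by (rule sum.swap)
    also have "\<dots> = (\<Sum>j\<in>{1..i}. bb j * bb (i + 1 - j)) $ n"
      by (simp add: fps_sum_nth fps_mult_nth atLeast0AtMost)
    finally show ?thesis .
  qed
  finally show ?thesis using first_part[OF i N] by simp
qed

lemma bb1_eq: "bb 1 = fps_X + bb 1 * bb 1"
proof (rule fps_ext)
  fix n
  show "bb 1 $ n = (fps_X + bb 1 * bb 1) $ n"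
  proof (cases "n \<le> 1")
    case True
    then consider "n = 0" | "n = 1" by linarith
    then show ?thesis
    proof cases
      case 1 then show ?thesis by (simp add: bb_zero fps_mult_nth)
    next
      case 2
      have "bb 1 $ 1 = 1" using bb_P[of 1 1] by simp
      then show ?thesis using 2 by (simp add: bb_zero fps_mult_nth)
    qed
  next
    case False
    then have "bb 1 $ n = (\<Sum>j\<in>{1..<1}. H (1 - 1 - j) (bb j)) $ n + (\<Sum>j\<in>{1..1}. bb j * bb (1 + 1 - j)) $ n"
      by (intro bb_rec_nth) auto
    then show ?thesis using False by simp
  qed
qed

lemma bb_rec:
  assumes i: "2 \<le> i"
  shows "bb i = (\<Sum>j\<in>{1..<i}. H (i - 1 - j) (bb j)) + (\<Sum>j\<in>{1..i}. bb j * bb (i + 1 - j))"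
proof (rule fps_ext)
  fix n
  show "bb i $ n = ((\<Sum>j\<in>{1..<i}. H (i - 1 - j) (bb j)) + (\<Sum>j\<in>{1..i}. bb j * bb (i + 1 - j))) $ n"
  proof (cases "3 \<le> n + i")
    case True then show ?thesis using bb_rec_nth[of i n] i by simp
  next
    case False
    then have n0: "n = 0" and i2: "i = 2" using i by auto
    have z: "bb j $ 0 = 0" if "j \<le> 2" for j
    proof (cases "j = 2")
      case True then show ?thesis using bb_P[of 2 0] by simp
    next
      case False then show ?thesis using that by (simp add: bb_zero)
    qed
    have s1: "{1..<2::nat} = {1}" by auto
    have s2: "{1..2::nat} = {1, 2}" by auto
    show ?thesis unfolding n0 i2 s1 s2 by (simp add: fps_mult_nth H_nth z)
  qed
qed

lemma s_0: "s $ 0 = 1" by (simp add: s_def om_nth)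
lemma t_0: "t $ 0 = 1" by (simp add: t_def om_nth)

lemma bb1_2: "2 * bb 1 = 1 - s"
proof -
  define w where "w = 2 * bb 1"
  define v where "v = 1 - s"
  have ww: "2 * w = 4 * fps_X + w * w"
  proof -
    have "2 * w = 4 * bb 1" by (simp add: w_def)
    also have "\<dots> = 4 * fps_X + 4 * (bb 1 * bb 1)" by (subst bb1_eq) (simp add: algebra_simps)
    also have "4 * (bb 1 * bb 1) = w * w" by (simp add: w_def algebra_simps)
    finally show ?thesis .
  qed
  have vv: "2 * v = 4 * fps_X + v * v"
    by (simp add: v_def algebra_simps s_sq)
  have "(w - v) * (2 - w - v) = 0"
  proof -
    have "(w - v) * (2 - w - v) = (2 * w - w * w) - (2 * v - v * v)" by (simp add: algebra_simps)
    also have "\<dots> = 0" using ww vv by simp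
    finally show ?thesis .
  qed
  moreover have "2 - w - v \<noteq> 0"
  proof
    assume "2 - w - v = 0"
    then have "(2 - w - v) $ 0 = 0" by simp
    moreover have "w $ 0 = 0" by (simp add: w_def bb_zero)
    moreover have "v $ 0 = 0" by (simp add: v_def s_0)
    ultimately show False by simp
  qed
  ultimately have "w = v" by simp
  then show ?thesis by (simp add: w_def v_def)
qed

lemma bb1_s: "bb 1 = fps_const (1/2) * (1 - s)"
proof -
  have "bb 1 = fps_const (1/2) * (2 * bb 1)"
    by (simp add: numeral_fps_const mult.assoc[symmetric] del: fps_const_mult)
  then show ?thesis by (simp only: bb1_2)
qed

lemma aux_solve: "(x::real fps) = u + ((1 - y) * x + v) \<Longrightarrow> y * x = u + v"
  by (simp add: algebra_simps)

lemma s_bb_rec: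
  assumes i: "2 \<le> i"
  shows "s * bb i = (\<Sum>j\<in>{1..<i}. H (i - 1 - j) (bb j)) + (\<Sum>j\<in>{2..<i}. bb j * bb (i + 1 - j))"
proof -
  define f where "f j = bb j * bb (i + 1 - j)" for j
  have split: "{1..i} = insert 1 (insert i {2..<i})" using i by auto
  have fin: "finite {2..<i}" by simp
  have n1: "1 \<notin> insert i {2..<i}" using i by auto
  have n2: "i \<notin> {2..<i}" by auto
  have s1: "(\<Sum>j\<in>{1..i}. f j) = f 1 + (f i + (\<Sum>j\<in>{2..<i}. f j))"
    unfolding split sum.insert[OF finite.insertI[OF fin] n1] sum.insert[OF fin n2] ..
  have f1: "f 1 = bb 1 * bb i" by (simp add: f_def)
  have fi: "f i = bb 1 * bb i" by (simp add: f_def mult.commute)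
  have two: "(2 * bb 1) * bb i = bb 1 * bb i + bb 1 * bb i" by (simp only: mult_2 distrib_right)
  have "f 1 + f i = (1 - s) * bb i" unfolding f1 fi two[symmetric] bb1_2 ..
  then have "(\<Sum>j\<in>{1..i}. f j) = (1 - s) * bb i + (\<Sum>j\<in>{2..<i}. f j)"
    unfolding s1 by (simp only: add.assoc[symmetric])
  then have "bb i = (\<Sum>j\<in>{1..<i}. H (i - 1 - j) (bb j)) + ((1 - s) * bb i + (\<Sum>j\<in>{2..<i}. f j))"
    using bb_rec[OF i] unfolding f_def by simp
  then show ?thesis unfolding f_def by (rule aux_solve)
qed

lemma t_s_mult: "f = t * (s * f)"
  by (simp add: mult.assoc[symmetric] mult.commute[of t] s_t)

lemma bb2: "bb 2 = fps_const (1/2) * (t - 1)"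
proof -
  have e: "{1..<2::nat} = {1}" by auto
  have "s * bb 2 = bb 1" using s_bb_rec[of 2] unfolding e by simp
  then have "bb 2 = t * bb 1" using t_s_mult[of "bb 2"] by simp
  also have "\<dots> = fps_const (1/2) * (t - t * s)" unfolding bb1_s by (simp add: algebra_simps)
  finally show ?thesis by (simp add: s_t mult.commute)
qed

lemma H_bb1:
  assumes k: "k \<ge> 1"
  shows "H k (bb 1) = fps_const (- (1/2) * (((1/2) gchoose k) * (-4)^k)) * om (1/2 - of_nat k)"
proof -
  define g where "g = ((1/2::real) gchoose k) * (-4)^k"
  have "H k (bb 1) = fps_const (1/2) * (H k 1 - H k s)"
    unfolding bb1_s H_const_mult H_diff ..
  moreover have "H k 1 = 0" using H_const[of k 1] k by simp
  moreover have "H k s = fps_const g * om (1/2 - of_nat k)" by (simp add: s_def H_om g_def)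
  ultimately have "H k (bb 1) = fps_const (1/2) * (- (fps_const g * om (1/2 - of_nat k)))" by simp
  also have "\<dots> = (- (fps_const (1/2) * fps_const g)) * om (1/2 - of_nat k)"
    by (simp only: mult_minus_right mult_minus_left mult.assoc)
  also have "- (fps_const (1/2) * fps_const g) = fps_const (- (1/2) * g)" by simp
  finally show ?thesis by (simp only: g_def)
qed

lemma H_bb2:
  assumes k: "k \<ge> 1"
  shows "H k (bb 2) = fps_const ((1/2) * (((-1/2) gchoose k) * (-4)^k)) * om (-1/2 - of_nat k)"
proof -
  have "H k (bb 2) = fps_const (1/2) * (H k t - H k 1)"
    unfolding bb2 H_const_mult H_diff ..
  moreover have "H k 1 = 0" using H_const[of k 1] k by simp
  ultimately show ?thesis by (simp add: t_def H_om mult.assoc[symmetric])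
qed

lemma bb_int: "bb j $ n \<in> \<int>"
  by (simp add: bb_def)

lemma C_H_bb1:
  assumes k: "k \<ge> 1"
  shows "C (1 - 2 * int k) (H k (bb 1))"
proof -
  define c where "c = - (1/2) * (((1/2::real) gchoose k) * (-4)^k)"
  have "H k (bb 1) $ 0 = c" using H_bb1[OF k] by (simp add: c_def om_nth)
  moreover have "H k (bb 1) $ 0 = bb 1 $ k" by (simp add: H_nth)
  ultimately have c: "c \<in> \<int>" using bb_int by metis
  have e: "om (1/2 - of_nat k) = om (of_int (1 - 2 * int k) / 2)"
    by (rule arg_cong[where f=om]) (simp add: field_simps)
  show ?thesis unfolding H_bb1[OF k] c_def[symmetric] e by (rule C_om[OF c])
qed

lemma C_H_bb2:
  assumes k: "k \<ge> 1"
  shows "C (- 1 - 2 * int k) (H k (bb 2))"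
proof -
  define c where "c = (1/2) * (((-1/2::real) gchoose k) * (-4)^k)"
  have "H k (bb 2) $ 0 = c" using H_bb2[OF k] by (simp add: c_def om_nth)
  moreover have "H k (bb 2) $ 0 = bb 2 $ k" by (simp add: H_nth)
  ultimately have c: "c \<in> \<int>" using bb_int by metis
  have e: "om (-1/2 - of_nat k) = om (of_int (- 1 - 2 * int k) / 2)"
    by (rule arg_cong[where f=om]) (simp add: field_simps)
  show ?thesis unfolding H_bb2[OF k] c_def[symmetric] e by (rule C_om[OF c])
qed

lemma bb2_2: "2 * bb 2 = t - 1"
proof -
  have e: "{1..<2::nat} = {1}" by auto
  have "s * bb 2 = bb 1" using s_bb_rec[of 2] unfolding e by simp
  then have "bb 2 = t * bb 1" using t_s_mult[of "bb 2"] by simp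
  then have "2 * bb 2 = 2 * (t * bb 1)" by simp
  also have "\<dots> = t * (2 * bb 1)" by (simp only: mult_ac)
  also have "\<dots> = t * (1 - s)" by (simp only: bb1_2)
  also have "\<dots> = t - s * t" by (simp only: right_diff_distrib mult_1_right mult.commute[of t s])
  also have "\<dots> = t - 1" by (simp only: s_t)
  finally show ?thesis .
qed

lemma H1_bb1: "H 1 (bb 1) = t"
proof -
  have "H 1 (bb 1) = fps_const (- (1/2) * (((1/2) gchoose 1) * (-4)^1)) * om (1/2 - of_nat 1)"
    by (rule H_bb1) simp
  also have "(1/2::real) gchoose 1 = 1/2" by (simp add: gbinomial_prod_rev)
  also have "om (1/2 - of_nat 1) = t" by (simp add: t_def)
  finally show ?thesis by simp
qed

lemma aux_sub: "(x::'b::ring_1) - y = 1 \<Longrightarrow> x - 1 = y"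
  by (simp add: algebra_simps)

lemma tt_X: "t * t - 1 = 4 * fps_X * (t * t)"
proof -
  have "t * t * (s * s) = (s * t) * (s * t)" by (simp only: mult_ac)
  then have "t * t * (s * s) = 1" by (simp add: s_t)
  then have "t * t * (1 - 4 * fps_X) = 1" by (simp add: s_sq)
  then have "t * t - t * t * (4 * fps_X) = 1" by (simp only: right_diff_distrib mult_1_right)
  then have "t * t - 1 = t * t * (4 * fps_X)" by (rule aux_sub)
  then show ?thesis by (simp only: mult_ac)
qed

lemma bb3: "bb 3 = t * t + fps_X * t * t * t"
proof -
  have e: "{1..<3::nat} = {1, 2}" "{2..<3::nat} = {2}" by auto
  have "s * bb 3 = H 1 (bb 1) + H 0 (bb 2) + bb 2 * bb 2"
    using s_bb_rec[of 3] unfolding e by (simp add: add.assoc)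
  then have sb: "s * bb 3 = t + bb 2 + bb 2 * bb 2" by (simp add: H1_bb1[unfolded One_nat_def])
  have "4 * (s * bb 3) = 4 * t + 2 * (2 * bb 2) + (2 * bb 2) * (2 * bb 2)"
    unfolding sb by (simp add: algebra_simps)
  also have "\<dots> = 4 * t + 2 * (t - 1) + (t - 1) * (t - 1)" by (simp only: bb2_2)
  also have "\<dots> = 4 * t + (t * t - 1)" by (simp add: algebra_simps)
  also have "\<dots> = 4 * (t + fps_X * (t * t))" by (simp add: tt_X algebra_simps)
  finally have e4: "4 * (s * bb 3) = 4 * (t + fps_X * (t * t))" .
  have n4: "(4::real fps) \<noteq> 0" by (simp add: numeral_fps_const)
  have "s * bb 3 = t + fps_X * (t * t)" using e4 mult_left_cancel[OF n4] by blast
  then have "bb 3 = t * (t + fps_X * (t * t))" using t_s_mult[of "bb 3"] by simp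
  then show ?thesis by (simp add: algebra_simps)
qed

lemma C_bb3: "C (-3) (bb 3)"
proof -
  have e1: "om (of_int (-3) / 2) = t * t * t"
    using om_mhalf_nat[of 3] by (simp add: power3_eq_cube)
  have e2: "om ((of_int (-3) + 1) / 2) = t * t"
    using om_mhalf_nat[of 2] by (simp add: power2_eq_square)
  show ?thesis unfolding C_def e1 e2 bb3
    by (rule exI[of _ 1], rule exI[of _ "[:0, 1:]"]) (simp add: intpoly_pCons algebra_simps)
qed

lemma C_bb: "3 \<le> i \<Longrightarrow> C (3 - 2 * int i) (bb i)"
proof (induction i rule: less_induct)
  case (less i)
  show ?case
  proof (cases "i = 3")
    case True then show ?thesis using C_bb3 by simp
  next
    case False
    with less.prems have i4: "4 \<le> i" by simp
    have IH: "\<And>j. 3 \<le> j \<Longrightarrow> j < i \<Longrightarrow> C (3 - 2 * int j) (bb j)" using less.IH by blast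
    define d where "d = 4 - 2 * int i"
    have CH: "C d (H (i - 1 - j) (bb j))" if j: "j \<in> {1..<i}" for j
    proof -
      consider "j = 1" | "j = 2" | "3 \<le> j" using j by force
      then show ?thesis
      proof cases
        case 1
        have c: "C (1 - 2 * int (i - 2)) (H (i - 2) (bb 1))" by (rule C_H_bb1) (use i4 in simp)
        have e: "i - 1 - j = i - 2" using 1 by simp
        have le: "d \<le> 1 - 2 * int (i - 2)" using i4 by (simp add: d_def of_nat_diff)
        show ?thesis unfolding e unfolding 1 by (rule C_mono[OF le c])
      next
        case 2
        have c: "C (- 1 - 2 * int (i - 3)) (H (i - 3) (bb 2))" by (rule C_H_bb2) (use i4 in simp)
        have e: "i - 1 - j = i - 3" using 2 by simp
        have le: "d \<le> - 1 - 2 * int (i - 3)" using i4 by (simp add: d_def of_nat_diff)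
        show ?thesis unfolding e unfolding 2 by (rule C_mono[OF le c])
      next
        case 3
        have jl: "j < i" using j by simp
        have c: "C ((3 - 2 * int j) - 2 * int (i - 1 - j)) (H (i - 1 - j) (bb j))"
          by (rule C_H, rule IH[OF 3 jl])
        have le: "d \<le> (3 - 2 * int j) - 2 * int (i - 1 - j)" using jl by (simp add: d_def of_nat_diff)
        show ?thesis by (rule C_mono[OF le c])
      qed
    qed
    have Cprod: "C d (bb j * bb (i + 1 - j))" if j: "j \<in> {3..<i-1}" for j
    proof -
      have j1: "3 \<le> j" "j < i" and j2: "3 \<le> i + 1 - j" "i + 1 - j < i" using j by auto
      have c: "C ((3 - 2 * int j) + (3 - 2 * int (i + 1 - j))) (bb j * bb (i + 1 - j))"
        by (rule C_mult[OF IH[OF j1] IH[OF j2]])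
      have ij: "int (i + 1 - j) = int i + 1 - int j" using j by auto
      have le: "d \<le> (3 - 2 * int j) + (3 - 2 * int (i + 1 - j))" unfolding ij by (simp add: d_def)
      show ?thesis by (rule C_mono[OF le c])
    qed
    have Cend: "C d (bb 2 * bb (i - 1) + bb (i - 1) * bb 2)"
    proof -
      have two: "bb 2 * bb (i - 1) + bb (i - 1) * bb 2 = (2 * bb 2) * bb (i - 1)"
        by (simp only: mult_2 distrib_right distrib_left mult.commute)
      have e: "bb 2 * bb (i - 1) + bb (i - 1) * bb 2 = t * bb (i - 1) + fps_const (-1) * bb (i - 1)"
      proof -
        have m1: "fps_const (-1::real) = -1" by (metis fps_const_1_eq_1 fps_const_neg)
        show ?thesis unfolding two bb2_2 m1 by (simp add: algebra_simps)
      qed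
      have i1: "3 \<le> i - 1" "i - 1 < i" using i4 by auto
      have c1: "C (3 - 2 * int (i - 1)) (bb (i - 1))" by (rule IH[OF i1])
      have c2: "C (3 - 2 * int (i - 1) - 1) (t * bb (i - 1))" by (rule C_t[OF c1])
      have le1: "d \<le> 3 - 2 * int (i - 1) - 1" using i4 by (simp add: d_def of_nat_diff)
      have le2: "d \<le> 3 - 2 * int (i - 1)" using i4 by (simp add: d_def of_nat_diff)
      have A: "C d (t * bb (i - 1))" by (rule C_mono[OF le1 c2])
      have B: "C d (fps_const (-1) * bb (i - 1))" by (rule C_smult, simp, rule C_mono[OF le2 c1])
      show ?thesis unfolding e by (rule C_add[OF A B])
    qed
    define f where "f j = bb j * bb (i + 1 - j)" for j
    have split: "{2..<i} = insert 2 (insert (i - 1) {3..<i-1})" using i4 by auto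
    have fin: "finite {3..<i-1}" by simp
    have n1: "2 \<notin> insert (i - 1) {3..<i-1}" using i4 by auto
    have n2: "i - 1 \<notin> {3..<i-1}" by auto
    have "(\<Sum>j\<in>{2..<i}. f j) = f 2 + (f (i - 1) + (\<Sum>j\<in>{3..<i-1}. f j))"
      unfolding split sum.insert[OF finite.insertI[OF fin] n1] sum.insert[OF fin n2] ..
    moreover have "f 2 = bb 2 * bb (i - 1)" using i4 by (simp add: f_def)
    moreover have "f (i - 1) = bb (i - 1) * bb 2"
    proof -
      have "i + 1 - (i - 1) = 2" using i4 by simp
      then show ?thesis by (simp add: f_def)
    qed
    ultimately have sp: "(\<Sum>j\<in>{2..<i}. f j) = (bb 2 * bb (i - 1) + bb (i - 1) * bb 2) + (\<Sum>j\<in>{3..<i-1}. f j)"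
      by (simp only: add.assoc)
    have "s * bb i = (\<Sum>j\<in>{1..<i}. H (i - 1 - j) (bb j))
        + ((bb 2 * bb (i - 1) + bb (i - 1) * bb 2) + (\<Sum>j\<in>{3..<i-1}. f j))"
      using s_bb_rec[of i] i4 sp unfolding f_def by simp
    moreover have "C d \<dots>"
      by (rule C_add[OF C_sum[OF CH] C_add[OF Cend C_sum[OF Cprod[unfolded f_def[symmetric]]]]])
    ultimately have "C d (s * bb i)" by simp
    then have "C (d - 1) (t * (s * bb i))" by (rule C_t)
    then show ?thesis using t_s_mult[of "bb i"] by (simp add: d_def)
  qed
qed

definition ev :: "real poly \<Rightarrow> real fps \<Rightarrow> real fps" where
  "ev R x = poly (map_poly fps_const R) x"

lemma mp_add: "map_poly fps_const (p + q) = map_poly fps_const p + map_poly fps_const (q :: real poly)"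
  by (rule poly_eqI) (simp add: coeff_map_poly)

lemma mp_smult: "map_poly fps_const (smult c p) = smult (fps_const c) (map_poly fps_const (p :: real poly))"
  by (rule poly_eqI) (simp add: coeff_map_poly)

lemma mp_pCons: "map_poly fps_const (pCons c p) = pCons (fps_const c) (map_poly fps_const (p :: real poly))"
  by (simp add: map_poly_pCons)

lemma ev_0[simp]: "ev 0 x = 0" by (simp add: ev_def)

lemma mp_diff: "map_poly fps_const (p - q) = map_poly fps_const p - map_poly fps_const (q :: real poly)"
  by (rule poly_eqI) (simp add: coeff_map_poly)
lemma ev_diff: "ev (p - q) x = ev p x - ev q x"
  by (simp add: ev_def mp_diff)
lemma ev_pCons: "ev (pCons c p) x = fps_const c + x * ev p x"
  by (simp add: ev_def mp_pCons)
lemma ev_add: "ev (p + q) x = ev p x + ev q x"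
  by (simp add: ev_def mp_add)
lemma ev_smult: "ev (smult c p) x = fps_const c * ev p x"
  by (simp add: ev_def mp_smult)
lemma ev_const: "ev [:c:] x = fps_const c"
  by (simp add: ev_pCons)
lemma ev_mult: "ev (p * q) x = ev p x * ev q x"
proof (induction p)
  case 0 then show ?case by simp
next
  case (pCons c p)
  have "ev (pCons c p * q) x = fps_const c * ev q x + x * ev (p * q) x"
    by (simp add: ev_add ev_smult ev_pCons)
  then show ?case using pCons by (simp add: ev_pCons algebra_simps)
qed
lemma ev_sum: "ev (\<Sum>j\<in>A. f j) x = (\<Sum>j\<in>A. ev (f j) x)"
  by (induction A rule: infinite_finite_induct) (simp_all add: ev_add)
lemma ev_X: "ev [:0, 1:] x = x"
  by (simp add: ev_pCons)
lemma ev_pCons0: "ev (pCons 0 p) x = x * ev p x"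
  by (simp add: ev_pCons)
lemma ev_pcompose: "ev (pcompose p q) x = ev p (ev q x)"
  by (induction p) (simp_all add: pcompose_pCons ev_add ev_mult ev_const ev_pCons)
lemma ev_fps_X: "ev p fps_X = fps_of_poly p"
  by (induction p) (simp_all add: ev_pCons fps_of_poly_pCons mult.commute)
lemma ev_altdef: "degree p \<le> N \<Longrightarrow> ev p x = (\<Sum>c\<le>N. fps_const (coeff p c) * x ^ c)"
proof -
  assume N: "degree p \<le> N"
  have dm: "degree (map_poly fps_const p) = degree p" by (rule degree_map_poly) simp
  have "ev p x = (\<Sum>c\<le>degree p. fps_const (coeff p c) * x ^ c)"
    unfolding ev_def poly_altdef dm by (simp add: coeff_map_poly)
  also have "\<dots> = (\<Sum>c\<le>N. fps_const (coeff p c) * x ^ c)"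
    by (rule sum.mono_neutral_left) (use N in \<open>auto simp: coeff_eq_0\<close>)
  finally show ?thesis .
qed

lemma ev_compose_fps: "y $ 0 = 0 \<Longrightarrow> ev p y = fps_compose (fps_of_poly p) y"
proof (induction p)
  case 0 then show ?case by simp
next
  case (pCons c p)
  then show ?case
    by (simp add: ev_pCons fps_of_poly_pCons fps_compose_add_distrib fps_compose_mult_distrib mult.commute)
qed

lemma ev_s_inj: "ev V s = 0 \<Longrightarrow> V = 0"
proof -
  assume V: "ev V s = 0"
  define y where "y = s - 1"
  have y0: "y $ 0 = 0" by (simp add: y_def s_0)
  have y1: "y \<noteq> 0"
  proof
    assume "y = 0" then have "y $ 1 = 0" by simp
    moreover have "y $ 1 = -2" by (simp add: y_def s_def om_nth)
    ultimately show False by simp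
  qed
  define W where "W = pcompose V [:1, 1:]"
  have "ev W y = ev V (ev [:1, 1:] y)" by (simp add: W_def ev_pcompose)
  also have "ev [:1, 1:] y = s" by (simp add: ev_pCons y_def)
  finally have "fps_compose (fps_of_poly W) y = 0" using V ev_compose_fps[OF y0, of W] by simp
  then have "fps_of_poly W = 0" using fps_compose_eq_0_iff[OF y0] y1 by simp
  then have "W = 0" using fps_of_poly_eq_iff[of W 0] by simp
  have "V = pcompose W [:-1, 1:]"
    by (simp add: W_def pcompose_assoc[symmetric] pcompose_pCons)
  then show "V = 0" using \<open>W = 0\<close> by simp
qed

definition Phi :: "real poly \<Rightarrow> int \<Rightarrow> real fps" where
  "Phi R d = om (of_int d / 2) * ev R s"

lemma om_cancel: "om (- (of_int d / 2)) * (om (of_int d / 2) * X) = X"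
proof -
  have "om (- (of_int d / 2)) * om (of_int d / 2) = 1" by (simp add: om_add om_0)
  then show ?thesis by (simp add: mult.assoc[symmetric])
qed

lemma Phi_inj: "Phi R d = Phi R' d \<Longrightarrow> R = R'"
proof -
  assume "Phi R d = Phi R' d"
  then have "om (- (of_int d / 2)) * Phi R d = om (- (of_int d / 2)) * Phi R' d" by simp
  then have "ev R s = ev R' s" unfolding Phi_def om_cancel .
  then have "ev (R - R') s = 0" by (simp add: ev_diff)
  then have "R - R' = 0" by (rule ev_s_inj)
  then show "R = R'" by simp
qed

lemma Phi_mult: "Phi (R * R') (d + d') = Phi R d * Phi R' d'"
proof -
  have "om (of_int (d + d') / 2) = om (of_int d / 2) * om (of_int d' / 2)"
    by (subst om_add, rule arg_cong[where f=om]) (simp add: field_simps)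
  then show ?thesis by (simp add: Phi_def ev_mult algebra_simps)
qed

lemma Phi_add: "Phi (R + R') d = Phi R d + Phi R' d"
  by (simp add: Phi_def ev_add algebra_simps)

lemma Phi_sum: "Phi (\<Sum>j\<in>A. f j) d = (\<Sum>j\<in>A. Phi (f j) d)"
  by (simp add: Phi_def ev_sum sum_distrib_left)

lemma Phi_const: "Phi [:c:] d = fps_const c * om (of_int d / 2)"
  by (simp add: Phi_def ev_const mult.commute)

lemma Phi_X: "Phi ([:0, 1:] * R) d = Phi R (d + 1)"
proof -
  have "om (of_int (d + 1) / 2) = s * om (of_int d / 2)"
    by (subst om_half[symmetric], rule arg_cong[where f=om]) (simp add: field_simps)
  then show ?thesis by (simp add: Phi_def ev_pCons0 algebra_simps)
qed

lemma Phi_s: "s * Phi R d = Phi R (d + 1)"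
  using Phi_X[of R d] by (simp add: Phi_def ev_pCons0 algebra_simps)

lemma Phi_sumform:
  assumes "degree R \<le> N"
  shows "Phi R d = (\<Sum>c\<le>N. fps_const (coeff R c) * om ((of_nat c + of_int d) / 2))"
proof -
  have "Phi R d = (\<Sum>c\<le>N. fps_const (coeff R c) * (om (of_int d / 2) * s ^ c))"
    by (simp add: Phi_def ev_altdef[OF assms] sum_distrib_left algebra_simps)
  also have "\<dots> = (\<Sum>c\<le>N. fps_const (coeff R c) * om ((of_nat c + of_int d) / 2))"
  proof (rule sum.cong[OF refl])
    fix c
    have "om (of_int d / 2) * s ^ c = om ((of_nat c + of_int d) / 2)"
      by (subst om_half_nat[symmetric], subst om_add, rule arg_cong[where f=om]) (simp add: field_simps)
    then show "fps_const (coeff R c) * (om (of_int d / 2) * s ^ c) = fps_const (coeff R c) * om ((of_nat c + of_int d) / 2)"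
      by simp
  qed
  finally show ?thesis .
qed

definition gam :: "nat \<Rightarrow> int \<Rightarrow> nat \<Rightarrow> real" where
  "gam k d c = (((of_nat c + of_int d) / 2) gchoose k) * (-4) ^ k"

definition T :: "nat \<Rightarrow> int \<Rightarrow> real poly \<Rightarrow> real poly" where
  "T k d R = (\<Sum>c\<le>degree R. monom (coeff R c * gam k d c) c)"

lemma coeff_T: "coeff (T k d R) c = coeff R c * gam k d c"
proof (cases "c \<le> degree R")
  case True then show ?thesis by (simp add: T_def coeff_sum coeff_monom)
next
  case False then show ?thesis by (simp add: T_def coeff_sum coeff_monom coeff_eq_0)
qed

lemma degree_T: "degree (T k d R) \<le> degree R"
  by (rule degree_le) (simp add: coeff_T coeff_eq_0)

lemma Phi_H: "H k (Phi R d) = Phi (T k d R) (d - 2 * int k)"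
proof -
  have "H k (Phi R d) = (\<Sum>c\<le>degree R. fps_const (coeff R c) * H k (om ((of_nat c + of_int d) / 2)))"
    by (simp add: Phi_sumform[OF order.refl] H_sum H_const_mult)
  also have "\<dots> = (\<Sum>c\<le>degree R. fps_const (coeff (T k d R) c) * om ((of_nat c + of_int (d - 2 * int k)) / 2))"
  proof (rule sum.cong[OF refl])
    fix c
    have "om ((of_nat c + of_int d) / 2 - of_nat k) = om ((of_nat c + of_int (d - 2 * int k)) / 2)"
      by (rule arg_cong[where f=om]) (simp add: field_simps)
    then show "fps_const (coeff R c) * H k (om ((of_nat c + of_int d) / 2)) =
          fps_const (coeff (T k d R) c) * om ((of_nat c + of_int (d - 2 * int k)) / 2)"
      by (simp add: H_om coeff_T gam_def mult.assoc[symmetric])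
  qed
  also have "\<dots> = Phi (T k d R) (d - 2 * int k)"
    by (rule Phi_sumform[symmetric]) (rule degree_T)
  finally show ?thesis .
qed

definition zl :: "real poly" where "zl = [:1/4, -1/4:]"
definition zu :: "real poly" where "zu = [:1/4, 0, -1/4:]"
definition psi :: "real poly \<Rightarrow> real poly \<Rightarrow> real poly" where
  "psi Q S = pcompose S zu + [:0, 1:] * pcompose Q zu"

lemma fc4: "fps_const (1/4) * (4 :: real fps) = 1"
  by (simp add: numeral_fps_const)

lemma ev_zu_s: "ev zu s = fps_X"
proof -
  have "ev zu s = fps_const (1/4) - fps_const (1/4) * (s * s)"
    by (simp add: zu_def ev_pCons algebra_simps fps_const_neg[symmetric] del: fps_const_neg)
  also have "\<dots> = fps_const (1/4) * (4 * fps_X)" by (simp add: s_sq algebra_simps)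
  also have "\<dots> = fps_X" by (simp only: mult.assoc[symmetric] fc4 mult_1_left)
  finally show ?thesis .
qed

lemma Phi_psi: "Phi (psi Q S) d = fps_of_poly S * om (of_int d / 2) + fps_of_poly Q * om ((of_int d + 1) / 2)"
proof -
  have e: "om ((of_int d + 1) / 2) = s * om (of_int d / 2)"
    by (subst om_half[symmetric], rule arg_cong[where f=om]) (simp add: field_simps)
  show ?thesis unfolding Phi_def psi_def e
    by (simp add: ev_add ev_pCons0 ev_pcompose ev_zu_s ev_fps_X algebra_simps)
qed

lemma sq_mult: "[:0, 0, 1:] * (F :: real poly) = pCons 0 (pCons 0 F)"
  by simp

lemma coeff_sq: "coeff (pcompose (p :: real poly) [:0, 0, 1:]) n = (if even n then coeff p (n div 2) else 0)"
proof (induction p arbitrary: n)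
  case 0 then show ?case by simp
next
  case (pCons c p)
  have e: "pcompose (pCons c p) [:0, 0, 1:] = pCons c (pCons 0 (pcompose p [:0, 0, 1:]))"
    by (simp add: pcompose_pCons)
  show ?case
  proof (cases n)
    case 0 then show ?thesis by (simp add: e)
  next
    case (Suc m)
    then show ?thesis
    proof (cases m)
      case 0 then show ?thesis using Suc by (simp add: e)
    next
      case (Suc k)
      then show ?thesis using \<open>n = Suc m\<close> pCons.IH[of k] by (simp add: e)
    qed
  qed
qed

lemma zu_sq: "zu = pcompose zl [:0, 0, 1:]"
  by (simp add: zu_def zl_def pcompose_pCons)

lemma coeff_psi: "coeff (psi Q S) n =
   (if even n then coeff (pcompose S zl) (n div 2) else coeff (pcompose Q zl) (n div 2))"
proof -
  have "psi Q S = pcompose (pcompose S zl) [:0, 0, 1:] + pCons 0 (pcompose (pcompose Q zl) [:0, 0, 1:])"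
    by (simp add: psi_def zu_sq pcompose_assoc)
  then show ?thesis
  proof (cases n)
    case 0 then show ?thesis using \<open>psi Q S = _\<close> by (simp add: coeff_sq del: coeff_pcompose_0)
  next
    case (Suc m) then show ?thesis using \<open>psi Q S = _\<close> by (auto simp: coeff_sq elim: oddE evenE)
  qed
qed

lemma degree_zl: "degree (pcompose S zl) = degree S"
  by (simp add: degree_pcompose zl_def)

definition RR :: "nat \<Rightarrow> real poly" where
  "RR i = (SOME R. Phi R (3 - 2 * int i) = bb i)"

lemma Phi_R2: "Phi [:1/2, -1/2:] (-1) = bb 2"
proof -
  have "Phi [:1/2, -1/2:] (-1) = t * (fps_const (1/2) - s * fps_const (1/2))"
    by (simp add: Phi_def t_def ev_pCons fps_const_neg[symmetric] del: fps_const_neg)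
  also have "\<dots> = fps_const (1/2) * (t - t * s)" by (simp add: algebra_simps)
  also have "\<dots> = bb 2" by (simp add: bb2 s_t mult.commute)
  finally show ?thesis .
qed

lemma RR_Phi: "2 \<le> i \<Longrightarrow> Phi (RR i) (3 - 2 * int i) = bb i"
proof -
  assume i: "2 \<le> i"
  have "\<exists>R. Phi R (3 - 2 * int i) = bb i"
  proof (cases "i = 2")
    case True then show ?thesis using Phi_R2 by auto
  next
    case False
    then have "C (3 - 2 * int i) (bb i)" using i by (intro C_bb) simp
    then obtain Q S where "bb i = fps_of_poly S * om (of_int (3 - 2 * int i) / 2) + fps_of_poly Q * om ((of_int (3 - 2 * int i) + 1) / 2)"
      unfolding C_def by blast
    then show ?thesis using Phi_psi by metis
  qed
  then show ?thesis unfolding RR_def by (rule someI_ex)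
qed

lemma RR2: "RR 2 = [:1/2, -1/2:]"
proof -
  have "Phi (RR 2) (-1) = bb 2" using RR_Phi[of 2] by simp
  then have "Phi (RR 2) (-1) = Phi [:1/2, -1/2:] (-1)" using Phi_R2 by simp
  then show ?thesis by (rule Phi_inj)
qed

lemma RR_psi: "3 \<le> i \<Longrightarrow> \<exists>Q S. intpoly Q \<and> intpoly S \<and> RR i = psi Q S \<and>
   bb i = fps_of_poly S * om (of_int (3 - 2 * int i) / 2) + fps_of_poly Q * om ((of_int (3 - 2 * int i) + 1) / 2)"
proof -
  assume i: "3 \<le> i"
  then have "C (3 - 2 * int i) (bb i)" by (rule C_bb)
  then obtain Q S where QS: "intpoly Q" "intpoly S"
    "bb i = fps_of_poly S * om (of_int (3 - 2 * int i) / 2) + fps_of_poly Q * om ((of_int (3 - 2 * int i) + 1) / 2)"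
    unfolding C_def by blast
  have "Phi (RR i) (3 - 2 * int i) = Phi (psi Q S) (3 - 2 * int i)"
    using RR_Phi[of i] i QS(3) Phi_psi by simp
  then have "RR i = psi Q S" by (rule Phi_inj)
  then show ?thesis using QS by blast
qed

definition kap :: "nat \<Rightarrow> real" where
  "kap k = - (1/2) * (((1/2) gchoose k) * (-4)^k)"

lemma RR_rec:
  assumes i: "3 \<le> i"
  shows "RR i = [:0, 1:] * ([:kap (i - 2):] + (\<Sum>j\<in>{2..<i}. T (i - 1 - j) (3 - 2 * int j) (RR j)))
               + (\<Sum>j\<in>{2..<i}. RR j * RR (i + 1 - j))"
proof (rule Phi_inj[of _ "4 - 2 * int i"])
  have lhs: "Phi (RR i) (4 - 2 * int i) = s * bb i"
    using Phi_s[of "RR i" "3 - 2 * int i"] RR_Phi[of i] i by simp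
  have k1: "Phi [:kap (i - 2):] (5 - 2 * int i) = H (i - 2) (bb 1)"
  proof -
    have "om (1/2 - of_nat (i - 2)) = om (of_int (5 - 2 * int i) / 2)"
      by (rule arg_cong[where f=om]) (use i in \<open>simp add: field_simps of_nat_diff\<close>)
    then show ?thesis using H_bb1[of "i - 2"] i by (simp add: Phi_const kap_def)
  qed
  have k2: "Phi (T (i - 1 - j) (3 - 2 * int j) (RR j)) (5 - 2 * int i) = H (i - 1 - j) (bb j)"
    if j: "j \<in> {2..<i}" for j
  proof -
    have e: "3 - 2 * int j - 2 * int (i - 1 - j) = 5 - 2 * int i" using j by (simp add: of_nat_diff)
    have "H (i - 1 - j) (bb j) = H (i - 1 - j) (Phi (RR j) (3 - 2 * int j))" using RR_Phi[of j] j by simp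
    also have "\<dots> = Phi (T (i - 1 - j) (3 - 2 * int j) (RR j)) (5 - 2 * int i)" by (simp only: Phi_H e)
    finally show ?thesis by simp
  qed
  have k3: "Phi (RR j * RR (i + 1 - j)) (4 - 2 * int i) = bb j * bb (i + 1 - j)"
    if j: "j \<in> {2..<i}" for j
  proof -
    have e: "(3 - 2 * int j) + (3 - 2 * int (i + 1 - j)) = 4 - 2 * int i" using j by (simp add: of_nat_diff)
    have r1: "Phi (RR j) (3 - 2 * int j) = bb j" using RR_Phi[of j] j by simp
    have r2: "Phi (RR (i + 1 - j)) (3 - 2 * int (i + 1 - j)) = bb (i + 1 - j)"
      by (rule RR_Phi) (use j in auto)
    have "Phi (RR j * RR (i + 1 - j)) ((3 - 2 * int j) + (3 - 2 * int (i + 1 - j))) = bb j * bb (i + 1 - j)"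
      unfolding Phi_mult r1 r2 ..
    then show ?thesis unfolding e .
  qed
  have split: "{1..<i} = insert 1 {2..<i}" using i by auto
  have "Phi ([:0, 1:] * ([:kap (i - 2):] + (\<Sum>j\<in>{2..<i}. T (i - 1 - j) (3 - 2 * int j) (RR j)))
               + (\<Sum>j\<in>{2..<i}. RR j * RR (i + 1 - j))) (4 - 2 * int i)
      = (Phi [:kap (i - 2):] (5 - 2 * int i) + (\<Sum>j\<in>{2..<i}. Phi (T (i - 1 - j) (3 - 2 * int j) (RR j)) (5 - 2 * int i)))
        + (\<Sum>j\<in>{2..<i}. Phi (RR j * RR (i + 1 - j)) (4 - 2 * int i))"
  proof -
    have "(4 - 2 * int i) + 1 = 5 - 2 * int i" by simp
    then show ?thesis by (simp only: Phi_add Phi_X Phi_sum)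
  qed
  also have "\<dots> = (H (i - 2) (bb 1) + (\<Sum>j\<in>{2..<i}. H (i - 1 - j) (bb j))) + (\<Sum>j\<in>{2..<i}. bb j * bb (i + 1 - j))"
    using k1 k2 k3 by simp
  also have "\<dots> = s * bb i"
    using s_bb_rec[of i] i unfolding split by (simp add: numeral_2_eq_2)
  finally show "Phi (RR i) (4 - 2 * int i) = Phi ([:0, 1:] * ([:kap (i - 2):] + (\<Sum>j\<in>{2..<i}. T (i - 1 - j) (3 - 2 * int j) (RR j)))
               + (\<Sum>j\<in>{2..<i}. RR j * RR (i + 1 - j))) (4 - 2 * int i)" using lhs by simp
qed

definition A :: "nat \<Rightarrow> real" where "A j = coeff (RR j) (j - 1)"
definition B :: "nat \<Rightarrow> real" where "B j = coeff (RR j) (j - 2)"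
definition Cc :: "nat \<Rightarrow> real" where "Cc j = coeff (RR j) (j - 3)"

lemma coeff_mult_top:
  fixes p q :: "real poly"
  assumes p: "degree p \<le> m" and q: "degree q \<le> n" and r: "r \<le> m" "r \<le> n"
  shows "coeff (p * q) (m + n - r) = (\<Sum>x\<in>{m - r..m}. coeff p x * coeff q (m + n - r - x))"
proof -
  have "coeff (p * q) (m + n - r) = (\<Sum>x\<le>m + n - r. coeff p x * coeff q (m + n - r - x))"
    by (rule coeff_mult)
  also have "\<dots> = (\<Sum>x\<in>{m - r..m}. coeff p x * coeff q (m + n - r - x))"
  proof (rule sum.mono_neutral_right)
    show "\<forall>x\<in>{..m + n - r} - {m - r..m}. coeff p x * coeff q (m + n - r - x) = 0"
    proof
      fix x assume x: "x \<in> {..m + n - r} - {m - r..m}"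
      then have "x > m \<or> m + n - r - x > n" using r by auto
      then show "coeff p x * coeff q (m + n - r - x) = 0"
        using p q by (auto simp: coeff_eq_0)
    qed
  qed (use r in auto)
  finally show ?thesis .
qed

lemma coeff_mult_top0:
  fixes p q :: "real poly"
  assumes "degree p \<le> m" "degree q \<le> n"
  shows "coeff (p * q) (m + n) = coeff p m * coeff q n"
  using coeff_mult_top[OF assms, of 0] by simp

lemma coeff_mult_top1:
  fixes p q :: "real poly"
  assumes "degree p \<le> m" "degree q \<le> n" "1 \<le> m" "1 \<le> n"
  shows "coeff (p * q) (m + n - 1) = coeff p m * coeff q (n - 1) + coeff p (m - 1) * coeff q n"
proof -
  have e: "{m - 1..m} = {m, m - 1}" using assms(3) by auto
  have "m \<noteq> m - 1" using assms(3) by simp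
  then show ?thesis using coeff_mult_top[OF assms(1,2), of 1] assms(3,4) unfolding e
    by (simp add: add.commute)
qed

lemma coeff_mult_top2:
  fixes p q :: "real poly"
  assumes "degree p \<le> m" "degree q \<le> n" "2 \<le> m" "2 \<le> n"
  shows "coeff (p * q) (m + n - 2) = coeff p m * coeff q (n - 2) + coeff p (m - 1) * coeff q (n - 1)
           + coeff p (m - 2) * coeff q n"
proof -
  have e: "{m - 2..m} = {m, m - 1, m - 2}" using assms(3) by auto
  have d: "m \<noteq> m - 1" "m \<noteq> m - 2" "m - 1 \<noteq> m - 2" using assms(3) by auto
  have i1: "m + n - 2 - m = n - 2" "m + n - 2 - (m - 1) = n - 1" "m + n - 2 - (m - 2) = n"
    "m + n - Suc (Suc (m - 2)) = n" using assms by auto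
  show ?thesis using coeff_mult_top[OF assms(1,2), of 2] assms(3,4) d unfolding e
    by (simp add: i1 algebra_simps)
qed

lemma T0: "T 0 d R = R"
  by (simp add: T_def gam_def poly_as_sum_of_monoms)

lemma RR3: "RR 3 = [:1/4, 1, -1/4:]"
proof -
  have e: "{2..<3::nat} = {2}" by auto
  have k: "kap 1 = 1" "kap (Suc 0) = 1" by (simp_all add: kap_def)
  show ?thesis using RR_rec[of 3] unfolding e by (simp add: RR2 T0 k)
qed

lemma degree_RR2: "degree (RR 2) = 1" by (simp add: RR2)

lemma coeff_const_poly: "coeff [:c:] m = (if m = 0 then c else 0)"
  by (cases m) simp_all

lemma coeff_lin_mult: "coeff ([:1, -1:] * (F :: real poly)) n = coeff F n - (if n = 0 then 0 else coeff F (n - 1))"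
  by (cases n) (simp_all add: coeff_pCons)

lemma gam0: "gam 0 d c = 1" by (simp add: gam_def)
lemma gam1: "gam 1 d c = - 2 * (of_nat c + of_int d)" by (simp add: gam_def field_simps)
lemma gam2: "gam 2 d c = 2 * (of_nat c + of_int d) * (of_nat c + of_int d - 2)"
proof -
  define y where "y = (of_nat c + of_int d) / (2::real)"
  have h: "y gchoose 2 = y * (y - 1) / 2"
    by (simp add: gbinomial_prod_rev numeral_2_eq_2 lessThan_Suc)
  have "gam 2 d c = (y gchoose 2) * 16" by (simp add: gam_def y_def)
  also have "\<dots> = 2 * (of_nat c + of_int d) * (of_nat c + of_int d - 2)"
    by (simp only: h) (simp add: y_def field_simps)
  finally show ?thesis .
qed

definition Yp :: "nat \<Rightarrow> real poly" where
  "Yp i = [:kap (i - 2):] + (\<Sum>j\<in>{2..<i}. T (i - 1 - j) (3 - 2 * int j) (RR j))"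
definition Mp :: "nat \<Rightarrow> real poly" where
  "Mp i = (\<Sum>j\<in>{3..<i-1}. RR j * RR (i + 1 - j))"

lemma lin_RR2: "RR 2 * F + F * RR 2 = [:1, -1:] * F"
proof -
  have e: "RR 2 + RR 2 = [:1, -1:]" by (simp add: RR2)
  have "RR 2 * F + F * RR 2 = (RR 2 + RR 2) * F" by (simp only: mult.commute[of F] distrib_right)
  then show ?thesis unfolding e .
qed

lemma R_decomp:
  assumes i: "4 \<le> i"
  shows "RR i = pCons 0 (Yp i) + [:1, -1:] * RR (i - 1) + Mp i"
proof -
  define f where "f j = RR j * RR (i + 1 - j)" for j
  have split: "{2..<i} = insert 2 (insert (i - 1) {3..<i-1})" using i by auto
  have fin: "finite {3..<i-1}" by simp
  have n1: "2 \<notin> insert (i - 1) {3..<i-1}" using i by auto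
  have n2: "i - 1 \<notin> {3..<i-1}" by auto
  have s1: "(\<Sum>j\<in>{2..<i}. f j) = f 2 + (f (i - 1) + (\<Sum>j\<in>{3..<i-1}. f j))"
    unfolding split sum.insert[OF finite.insertI[OF fin] n1] sum.insert[OF fin n2] ..
  have f2: "f 2 = RR 2 * RR (i - 1)" using i by (simp add: f_def)
  have fi: "f (i - 1) = RR (i - 1) * RR 2"
  proof -
    have "i + 1 - (i - 1) = 2" using i by simp
    then show ?thesis by (simp add: f_def)
  qed
  have s2: "(\<Sum>j\<in>{2..<i}. f j) = (RR 2 * RR (i - 1) + RR (i - 1) * RR 2) + (\<Sum>j\<in>{3..<i-1}. f j)"
    unfolding s1 f2 fi by (simp only: add.assoc)
  have "(\<Sum>j\<in>{2..<i}. f j) = [:1, -1:] * RR (i - 1) + Mp i"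
    unfolding s2 unfolding lin_RR2 Mp_def f_def ..
  then show ?thesis using RR_rec[of i] i unfolding Yp_def f_def by simp
qed

lemma degree_Yp:
  assumes i: "4 \<le> i" and deg: "\<And>j. 2 \<le> j \<Longrightarrow> j < i \<Longrightarrow> degree (RR j) \<le> j - 1"
  shows "degree (Yp i) \<le> i - 2"
proof -
  have "degree (\<Sum>j\<in>{2..<i}. T (i - 1 - j) (3 - 2 * int j) (RR j)) \<le> i - 2"
  proof (rule degree_sum_le)
    fix j assume j: "j \<in> {2..<i}"
    have "degree (T (i - 1 - j) (3 - 2 * int j) (RR j)) \<le> degree (RR j)" by (rule degree_T)
    also have "\<dots> \<le> j - 1" using deg j by auto
    also have "\<dots> \<le> i - 2" using j by auto
    finally show "degree (T (i - 1 - j) (3 - 2 * int j) (RR j)) \<le> i - 2" .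
  qed simp
  then show ?thesis unfolding Yp_def using degree_add_le[of "[:kap (i - 2):]" "i - 2"] by simp
qed

lemma degree_Mp:
  assumes i: "4 \<le> i" and deg: "\<And>j. 2 \<le> j \<Longrightarrow> j < i \<Longrightarrow> degree (RR j) \<le> j - 1"
  shows "degree (Mp i) \<le> i - 1"
  unfolding Mp_def
proof (rule degree_sum_le)
  fix j assume j: "j \<in> {3..<i-1}"
  have "degree (RR j * RR (i + 1 - j)) \<le> degree (RR j) + degree (RR (i + 1 - j))" by (rule degree_mult_le)
  also have "\<dots> \<le> (j - 1) + (i + 1 - j - 1)" using deg[of j] deg[of "i + 1 - j"] j by (intro add_mono) auto
  also have "\<dots> = i - 1" using j by auto
  finally show "degree (RR j * RR (i + 1 - j)) \<le> i - 1" .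
qed simp

lemma degree_RR_step:
  assumes i: "4 \<le> i" and deg: "\<And>j. 2 \<le> j \<Longrightarrow> j < i \<Longrightarrow> degree (RR j) \<le> j - 1"
  shows "degree (RR i) \<le> i - 1"
proof -
  have d1: "degree (pCons 0 (Yp i)) \<le> i - 1"
    using degree_Yp[OF i deg] i by (cases "Yp i = 0") auto
  have m: "degree ([:1, -1:] * RR (i - 1)) \<le> degree [:1, -1::real:] + degree (RR (i - 1))"
    by (rule degree_mult_le)
  have m1: "degree [:1, -1::real:] = 1" by simp
  have m2: "degree (RR (i - 1)) \<le> i - 1 - 1" using deg[of "i - 1"] i by simp
  have d2: "degree ([:1, -1:] * RR (i - 1)) \<le> i - 1" using m m1 m2 i by arith
  have d3: "degree (Mp i) \<le> i - 1" by (rule degree_Mp[OF i deg])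
  show ?thesis unfolding R_decomp[OF i]
    by (intro degree_add_le d1 d2 d3)
qed

lemma coeff_Yp: "coeff (Yp i) m = (if m = 0 then kap (i - 2) else 0)
    + (\<Sum>j\<in>{2..<i}. coeff (RR j) m * gam (i - 1 - j) (3 - 2 * int j) m)"
  by (simp add: Yp_def coeff_sum coeff_T coeff_const_poly)

lemma coeff_Mp:
  assumes i: "4 \<le> i" and deg: "\<And>j. 2 \<le> j \<Longrightarrow> j < i \<Longrightarrow> degree (RR j) \<le> j - 1"
  shows "coeff (Mp i) (i - 1) = (\<Sum>j\<in>{3..<i-1}. A j * A (i + 1 - j))"
    and "coeff (Mp i) (i - 2) = (\<Sum>j\<in>{3..<i-1}. A j * B (i + 1 - j) + B j * A (i + 1 - j))"
    and "coeff (Mp i) (i - 3) = (\<Sum>j\<in>{3..<i-1}. A j * Cc (i + 1 - j) + B j * B (i + 1 - j) + Cc j * A (i + 1 - j))"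
proof -
  have facts: "degree (RR j) \<le> j - 1" "degree (RR (i + 1 - j)) \<le> i - j" "2 \<le> j - 1" "2 \<le> i - j"
    "(j - 1) + (i - j) = i - 1" "i + 1 - j - 1 = i - j" "i + 1 - j - 2 = i - j - 1" "i + 1 - j - 3 = i - j - 2"
    if j: "j \<in> {3..<i-1}" for j
    using j deg[of j] deg[of "i + 1 - j"] by auto
  show "coeff (Mp i) (i - 1) = (\<Sum>j\<in>{3..<i-1}. A j * A (i + 1 - j))"
    unfolding Mp_def coeff_sum
  proof (rule sum.cong[OF refl])
    fix j assume j: "j \<in> {3..<i-1}"
    have "coeff (RR j * RR (i + 1 - j)) ((j - 1) + (i - j)) = coeff (RR j) (j - 1) * coeff (RR (i + 1 - j)) (i - j)"
      by (rule coeff_mult_top0) (use facts[OF j] in auto)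
    then show "coeff (RR j * RR (i + 1 - j)) (i - 1) = A j * A (i + 1 - j)"
      using facts[OF j] by (simp add: A_def)
  qed
  show "coeff (Mp i) (i - 2) = (\<Sum>j\<in>{3..<i-1}. A j * B (i + 1 - j) + B j * A (i + 1 - j))"
    unfolding Mp_def coeff_sum
  proof (rule sum.cong[OF refl])
    fix j assume j: "j \<in> {3..<i-1}"
    have "coeff (RR j * RR (i + 1 - j)) ((j - 1) + (i - j) - 1) = coeff (RR j) (j - 1) * coeff (RR (i + 1 - j)) (i - j - 1)
        + coeff (RR j) (j - 1 - 1) * coeff (RR (i + 1 - j)) (i - j)"
      by (rule coeff_mult_top1) (use facts[OF j] in auto)
    moreover have "(j - 1) + (i - j) - 1 = i - 2" "j - 1 - 1 = j - 2" using j by auto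
    ultimately show "coeff (RR j * RR (i + 1 - j)) (i - 2) = A j * B (i + 1 - j) + B j * A (i + 1 - j)"
      using facts[OF j] by (simp add: A_def B_def)
  qed
  show "coeff (Mp i) (i - 3) = (\<Sum>j\<in>{3..<i-1}. A j * Cc (i + 1 - j) + B j * B (i + 1 - j) + Cc j * A (i + 1 - j))"
    unfolding Mp_def coeff_sum
  proof (rule sum.cong[OF refl])
    fix j assume j: "j \<in> {3..<i-1}"
    have "coeff (RR j * RR (i + 1 - j)) ((j - 1) + (i - j) - 2) = coeff (RR j) (j - 1) * coeff (RR (i + 1 - j)) (i - j - 2)
        + coeff (RR j) (j - 1 - 1) * coeff (RR (i + 1 - j)) (i - j - 1) + coeff (RR j) (j - 1 - 2) * coeff (RR (i + 1 - j)) (i - j)"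
      by (rule coeff_mult_top2) (use facts[OF j] in auto)
    moreover have "(j - 1) + (i - j) - 2 = i - 3" "j - 1 - 1 = j - 2" "j - 1 - 2 = j - 3" using j by auto
    ultimately show "coeff (RR j * RR (i + 1 - j)) (i - 3) = A j * Cc (i + 1 - j) + B j * B (i + 1 - j) + Cc j * A (i + 1 - j)"
      using facts[OF j] by (simp add: A_def B_def Cc_def)
  qed
qed

lemma gam1': "gam (Suc 0) d c = - 2 * (of_nat c + of_int d)" using gam1 by simp

lemma coeff_RR_step:
  assumes i: "4 \<le> i" and n: "1 \<le> n"
  shows "coeff (RR i) n = coeff (Yp i) (n - 1) + (coeff (RR (i - 1)) n - coeff (RR (i - 1)) (n - 1)) + coeff (Mp i) n"
proof -
  have "coeff (pCons 0 (Yp i)) n = coeff (Yp i) (n - 1)" using n by (cases n) auto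
  then show ?thesis unfolding R_decomp[OF i] coeff_add coeff_lin_mult using n by simp
qed

lemma Y_top:
  assumes i: "4 \<le> i" and deg: "\<And>j. 2 \<le> j \<Longrightarrow> j < i \<Longrightarrow> degree (RR j) \<le> j - 1"
  shows "coeff (Yp i) (i - 2) = A (i - 1)"
proof -
  define g where "g j = coeff (RR j) (i - 2) * gam (i - 1 - j) (3 - 2 * int j) (i - 2)" for j
  have "(\<Sum>j\<in>{2..<i}. g j) = (\<Sum>j\<in>{i - 1}. g j)"
  proof (rule sum.mono_neutral_right)
    show "\<forall>j\<in>{2..<i} - {i - 1}. g j = 0"
    proof
      fix j assume j: "j \<in> {2..<i} - {i - 1}"
      then have "degree (RR j) < i - 2" using deg[of j] by auto
      then show "g j = 0" by (simp add: g_def coeff_eq_0)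
    qed
  qed (use i in auto)
  moreover have "g (i - 1) = A (i - 1)"
  proof -
    have e: "i - 1 - (i - 1) = 0" "i - 1 - 1 = i - 2" by auto
    show ?thesis unfolding g_def A_def e by (simp add: gam0)
  qed
  ultimately show ?thesis using i unfolding coeff_Yp g_def by simp
qed

lemma Y_2:
  assumes i: "4 \<le> i" and deg: "\<And>j. 2 \<le> j \<Longrightarrow> j < i \<Longrightarrow> degree (RR j) \<le> j - 1"
  shows "coeff (Yp i) (i - 3) = B (i - 1) + 2 * (real i - 4) * A (i - 2)"
proof -
  define g where "g j = coeff (RR j) (i - 3) * gam (i - 1 - j) (3 - 2 * int j) (i - 3)" for j
  have "(\<Sum>j\<in>{2..<i}. g j) = (\<Sum>j\<in>{i - 2, i - 1}. g j)"
  proof (rule sum.mono_neutral_right)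
    show "\<forall>j\<in>{2..<i} - {i - 2, i - 1}. g j = 0"
    proof
      fix j assume j: "j \<in> {2..<i} - {i - 2, i - 1}"
      then have "degree (RR j) < i - 3" using deg[of j] by auto
      then show "g j = 0" by (simp add: g_def coeff_eq_0)
    qed
  qed (use i in auto)
  moreover have "(\<Sum>j\<in>{i - 2, i - 1}. g j) = g (i - 2) + g (i - 1)" using i by simp
  moreover have "g (i - 1) = B (i - 1)"
  proof -
    have e: "i - 1 - (i - 1) = 0" "i - 1 - 2 = i - 3" by auto
    show ?thesis unfolding g_def B_def e by (simp add: gam0)
  qed
  moreover have "g (i - 2) = 2 * (real i - 4) * A (i - 2)"
  proof -
    have e: "i - 1 - (i - 2) = 1" "i - 2 - 1 = i - 3" using i by auto
    have "gam 1 (3 - 2 * int (i - 2)) (i - 3) = 2 * (real i - 4)"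
      using i by (simp add: gam1 gam1' of_nat_diff)
    then show ?thesis unfolding g_def A_def e by simp
  qed
  ultimately show ?thesis using i unfolding coeff_Yp g_def by simp
qed

lemma Y_3:
  assumes i: "4 \<le> i" and deg: "\<And>j. 2 \<le> j \<Longrightarrow> j < i \<Longrightarrow> degree (RR j) \<le> j - 1"
  shows "coeff (Yp i) (i - 4) = (if i = 4 then kap 2 else 2 * (real i - 5) * (real i - 3) * A (i - 3))
       + Cc (i - 1) + 2 * (real i - 3) * B (i - 2)"
proof -
  define g where "g j = coeff (RR j) (i - 4) * gam (i - 1 - j) (3 - 2 * int j) (i - 4)" for j
  have g1: "g (i - 1) = Cc (i - 1)"
  proof -
    have e: "i - 1 - (i - 1) = 0" "i - 1 - 3 = i - 4" by auto
    show ?thesis unfolding g_def Cc_def e by (simp add: gam0)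
  qed
  have g2: "g (i - 2) = 2 * (real i - 3) * B (i - 2)"
  proof -
    have e: "i - 1 - (i - 2) = 1" "i - 2 - 2 = i - 4" using i by auto
    have "gam 1 (3 - 2 * int (i - 2)) (i - 4) = 2 * (real i - 3)"
      using i by (simp add: gam1 gam1' of_nat_diff)
    then show ?thesis unfolding g_def B_def e by simp
  qed
  show ?thesis
  proof (cases "i = 4")
    case True
    have s: "{2..<4::nat} = {2, 3}" by auto
    have "coeff (Yp 4) 0 = kap 2 + (coeff (RR 2) 0 * gam (Suc 0) (-1) 0 + coeff (RR 3) 0 * gam 0 (-3) 0)"
      unfolding coeff_Yp s by simp
    moreover have "gam (Suc 0) (-1) 0 = 2" by (simp add: gam1')
    moreover have "Cc 3 = coeff (RR 3) 0" "B 2 = coeff (RR 2) 0" by (simp_all add: Cc_def B_def)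
    ultimately show ?thesis using True by (simp add: gam0)
  next
    case False
    then have i5: "5 \<le> i" using i by simp
    have "(\<Sum>j\<in>{2..<i}. g j) = (\<Sum>j\<in>{i - 3, i - 2, i - 1}. g j)"
    proof (rule sum.mono_neutral_right)
      show "\<forall>j\<in>{2..<i} - {i - 3, i - 2, i - 1}. g j = 0"
      proof
        fix j assume j: "j \<in> {2..<i} - {i - 3, i - 2, i - 1}"
        then have "degree (RR j) < i - 4" using deg[of j] by auto
        then show "g j = 0" by (simp add: g_def coeff_eq_0)
      qed
    qed (use i5 in auto)
    moreover have "(\<Sum>j\<in>{i - 3, i - 2, i - 1}. g j) = g (i - 3) + g (i - 2) + g (i - 1)"
    proof -
      have d: "i - 3 \<noteq> i - 2" "i - 3 \<noteq> i - 1" "i - 2 \<noteq> i - 1" using i5 by auto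
      then show ?thesis by (simp add: add.assoc)
    qed
    moreover have "g (i - 3) = 2 * (real i - 5) * (real i - 3) * A (i - 3)"
    proof -
      have e: "i - 1 - (i - 3) = 2" "i - 3 - 1 = i - 4" using i5 by auto
      have "gam 2 (3 - 2 * int (i - 3)) (i - 4) = 2 * (real i - 5) * (real i - 3)"
        using i5 by (simp add: gam2 of_nat_diff algebra_simps)
      then show ?thesis unfolding g_def A_def e by simp
    qed
    ultimately show ?thesis using i5 g1 g2 unfolding coeff_Yp g_def by simp
  qed
qed

lemma A_step:
  assumes i: "4 \<le> i" and deg: "\<And>j. 2 \<le> j \<Longrightarrow> j < i \<Longrightarrow> degree (RR j) \<le> j - 1"
  shows "A i = (\<Sum>j\<in>{3..<i-1}. A j * A (i + 1 - j))"
proof -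
  have d: "degree (RR (i - 1)) \<le> i - 1 - 1" using deg[of "i - 1"] i by simp
  have z: "coeff (RR (i - 1)) (i - 1) = 0" by (rule coeff_eq_0) (use d i in arith)
  have n: "1 \<le> i - 1" using i by simp
  have e: "i - 1 - 1 = i - 2" by simp
  have c: "coeff (RR i) (i - 1) = coeff (Yp i) (i - 2) + (coeff (RR (i - 1)) (i - 1) - coeff (RR (i - 1)) (i - 2)) + coeff (Mp i) (i - 1)"
    using coeff_RR_step[OF i n] unfolding e .
  have a1: "A (i - 1) = coeff (RR (i - 1)) (i - 2)" unfolding A_def e ..
  have "A i = coeff (Yp i) (i - 2) + (coeff (RR (i - 1)) (i - 1) - coeff (RR (i - 1)) (i - 2)) + coeff (Mp i) (i - 1)"
    unfolding A_def[of i] by (rule c)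
  then show ?thesis using Y_top[OF i deg] coeff_Mp(1)[OF i deg] z a1 by linarith
qed

lemma B_step:
  assumes i: "4 \<le> i" and deg: "\<And>j. 2 \<le> j \<Longrightarrow> j < i \<Longrightarrow> degree (RR j) \<le> j - 1"
  shows "B i = 2 * (real i - 4) * A (i - 2) + A (i - 1) + (\<Sum>j\<in>{3..<i-1}. A j * B (i + 1 - j) + B j * A (i + 1 - j))"
proof -
  have n: "1 \<le> i - 2" using i by simp
  have e: "i - 2 - 1 = i - 3" "i - 1 - 1 = i - 2" "i - 1 - 2 = i - 3" by auto
  have c: "coeff (RR i) (i - 2) = coeff (Yp i) (i - 3) + (coeff (RR (i - 1)) (i - 2) - coeff (RR (i - 1)) (i - 3)) + coeff (Mp i) (i - 2)"
    using coeff_RR_step[OF i n] unfolding e .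
  have a1: "A (i - 1) = coeff (RR (i - 1)) (i - 2)" unfolding A_def e ..
  have b1: "B (i - 1) = coeff (RR (i - 1)) (i - 3)" unfolding B_def e ..
  have "B i = coeff (Yp i) (i - 3) + (coeff (RR (i - 1)) (i - 2) - coeff (RR (i - 1)) (i - 3)) + coeff (Mp i) (i - 2)"
    unfolding B_def[of i] by (rule c)
  then show ?thesis using Y_2[OF i deg] coeff_Mp(2)[OF i deg] a1 b1 by linarith
qed

lemma C_step:
  assumes i: "4 \<le> i" and deg: "\<And>j. 2 \<le> j \<Longrightarrow> j < i \<Longrightarrow> degree (RR j) \<le> j - 1"
  shows "Cc i = (if i = 4 then kap 2 else 2 * (real i - 5) * (real i - 3) * A (i - 3))
       + 2 * (real i - 3) * B (i - 2) + B (i - 1)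
       + (\<Sum>j\<in>{3..<i-1}. A j * Cc (i + 1 - j) + B j * B (i + 1 - j) + Cc j * A (i + 1 - j))"
proof -
  have n: "1 \<le> i - 3" using i by simp
  have e: "i - 3 - 1 = i - 4" "i - 1 - 2 = i - 3" "i - 1 - 3 = i - 4" by auto
  have c: "coeff (RR i) (i - 3) = coeff (Yp i) (i - 4) + (coeff (RR (i - 1)) (i - 3) - coeff (RR (i - 1)) (i - 4)) + coeff (Mp i) (i - 3)"
    using coeff_RR_step[OF i n] unfolding e .
  have b1: "B (i - 1) = coeff (RR (i - 1)) (i - 3)" unfolding B_def e ..
  have c1: "Cc (i - 1) = coeff (RR (i - 1)) (i - 4)" unfolding Cc_def e ..
  have "Cc i = coeff (Yp i) (i - 4) + (coeff (RR (i - 1)) (i - 3) - coeff (RR (i - 1)) (i - 4)) + coeff (Mp i) (i - 3)"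
    unfolding Cc_def[of i] by (rule c)
  then show ?thesis using Y_3[OF i deg] coeff_Mp(3)[OF i deg] b1 c1 by linarith
qed

definition sg :: "nat \<Rightarrow> real" where "sg c = (-1) ^ (c div 2)"

lemma sg_split: "c = a1 + b1 \<Longrightarrow> even a1 \<or> even b1 \<Longrightarrow> sg c = sg a1 * sg b1"
proof -
  assume c: "c = a1 + b1" and e: "even a1 \<or> even b1"
  have "c div 2 = a1 div 2 + b1 div 2" using c e by (auto elim!: evenE)
  then show ?thesis by (simp add: sg_def power_add)
qed

lemma prod_pos: "sg c = sg a1 * sg b1 \<Longrightarrow> 0 < sg a1 * x \<Longrightarrow> 0 < sg b1 * y \<Longrightarrow> 0 < sg c * (x * y)"
proof -
  assume c: "sg c = sg a1 * sg b1" and h: "0 < sg a1 * x" "0 < sg b1 * y"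
  have eq: "sg a1 * sg b1 * (x * y) = (sg a1 * x) * (sg b1 * y)" by (simp add: algebra_simps)
  have p: "0 < (sg a1 * x) * (sg b1 * y)" by (rule mult_pos_pos) (rule h(1), rule h(2))
  show ?thesis unfolding c eq by (rule p)
qed

definition Inv :: "nat \<Rightarrow> bool" where
  "Inv i \<longleftrightarrow> degree (RR i) \<le> i - 1 \<and> (odd i \<longrightarrow> 0 < sg (i - 1) * A i) \<and> (even i \<longrightarrow> A i = 0)
     \<and> 0 < sg (i - 2) * B i \<and> (even i \<longrightarrow> 0 < sg (i - 3) * Cc i)"

lemma Inv3: "Inv 3"
proof -
  have a: "A 3 = -1/4" unfolding A_def RR3 by (simp add: numeral_2_eq_2)
  have b: "B 3 = 1" unfolding B_def RR3 by simp
  have d: "degree (RR 3) \<le> 3 - 1" unfolding RR3 by simp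
  have s2: "sg 2 = -1" "sg 1 = 1" by (simp_all add: sg_def)
  show ?thesis unfolding Inv_def using a b d s2 by simp
qed

lemma A2: "A 2 = -1/2" by (simp add: A_def RR2)
lemma B2: "B 2 = 1/2" by (simp add: B_def RR2)

lemma termA_odd:
  assumes i: "odd i" and j: "j \<in> {3..<i-1}" and IH: "\<And>j. 3 \<le> j \<Longrightarrow> j < i \<Longrightarrow> Inv j"
  shows "0 \<le> sg (i - 1) * (A j * A (i + 1 - j))"
proof (cases "even j")
  case True
  then have "A j = 0" using IH[of j] j by (auto simp: Inv_def)
  then show ?thesis by simp
next
  case False
  have jb: "3 \<le> j" "j < i - 1" using j by auto
  have l: "odd (i + 1 - j)" using i False jb by presburger
  have l2: "3 \<le> i + 1 - j" "i + 1 - j < i" using jb by auto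
  have "0 < sg (i - 1) * (A j * A (i + 1 - j))"
  proof (rule prod_pos)
    show "sg (i - 1) = sg (j - 1) * sg (i + 1 - j - 1)"
      by (rule sg_split) (use jb False in presburger)+
    show "0 < sg (j - 1) * A j" using IH[of j] jb False by (auto simp: Inv_def)
    show "0 < sg (i + 1 - j - 1) * A (i + 1 - j)" using IH[of "i + 1 - j"] l l2 by (auto simp: Inv_def)
  qed
  then show ?thesis by simp
qed

lemma termA_even:
  assumes i: "even i" and j: "j \<in> {3..<i-1}" and IH: "\<And>j. 3 \<le> j \<Longrightarrow> j < i \<Longrightarrow> Inv j"
  shows "A j * A (i + 1 - j) = 0"
proof (cases "even j")
  case True
  then have "A j = 0" using IH[of j] j by (auto simp: Inv_def)
  then show ?thesis by simp
next
  case False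
  have jb: "3 \<le> j" "j < i - 1" using j by auto
  have l: "even (i + 1 - j)" using i False jb by presburger
  have l2: "3 \<le> i + 1 - j" "i + 1 - j < i" using jb by auto
  have "A (i + 1 - j) = 0" using IH[of "i + 1 - j"] l l2 by (auto simp: Inv_def)
  then show ?thesis by simp
qed

lemma termB:
  assumes i4: "4 \<le> i" and j: "j \<in> {3..<i-1}" and IH: "\<And>j. 3 \<le> j \<Longrightarrow> j < i \<Longrightarrow> Inv j"
  shows "0 \<le> sg (i - 2) * (A j * B (i + 1 - j) + B j * A (i + 1 - j))"
proof -
  have jb: "3 \<le> j" "j < i" and lb: "3 \<le> i + 1 - j" "i + 1 - j < i" using j by auto
  have jj: "3 \<le> j" "j < i - 1" using j by auto
  have t1: "0 \<le> sg (i - 2) * (A j * B (i + 1 - j))"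
  proof (cases "even j")
    case True
    then have "A j = 0" using IH[OF jb] by (auto simp: Inv_def)
    then show ?thesis by simp
  next
    case False
    have "0 < sg (i - 2) * (A j * B (i + 1 - j))"
    proof (rule prod_pos)
      show "sg (i - 2) = sg (j - 1) * sg (i + 1 - j - 2)" by (rule sg_split) (use jj False in presburger)+
      show "0 < sg (j - 1) * A j" using IH[OF jb] False by (auto simp: Inv_def)
      show "0 < sg (i + 1 - j - 2) * B (i + 1 - j)" using IH[OF lb] by (auto simp: Inv_def)
    qed
    then show ?thesis by simp
  qed
  have t2: "0 \<le> sg (i - 2) * (B j * A (i + 1 - j))"
  proof (cases "even (i + 1 - j)")
    case True
    then have "A (i + 1 - j) = 0" using IH[OF lb] by (auto simp: Inv_def)
    then show ?thesis by simp
  next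
    case False
    have "0 < sg (i - 2) * (B j * A (i + 1 - j))"
    proof (rule prod_pos)
      show "sg (i - 2) = sg (j - 2) * sg (i + 1 - j - 1)" by (rule sg_split) (use jj False in presburger)+
      show "0 < sg (j - 2) * B j" using IH[OF jb] by (auto simp: Inv_def)
      show "0 < sg (i + 1 - j - 1) * A (i + 1 - j)" using IH[OF lb] False by (auto simp: Inv_def)
    qed
    then show ?thesis by simp
  qed
  show ?thesis using t1 t2 by (simp add: distrib_left)
qed

lemma termC:
  assumes i: "even i" "4 \<le> i" and j: "j \<in> {3..<i-1}" and IH: "\<And>j. 3 \<le> j \<Longrightarrow> j < i \<Longrightarrow> Inv j"
  shows "0 \<le> sg (i - 3) * (A j * Cc (i + 1 - j) + B j * B (i + 1 - j) + Cc j * A (i + 1 - j))"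
proof -
  have jb: "3 \<le> j" "j < i" and lb: "3 \<le> i + 1 - j" "i + 1 - j < i" using j by auto
  have jj: "3 \<le> j" "j < i - 1" using j by auto
  have t1: "0 \<le> sg (i - 3) * (A j * Cc (i + 1 - j))"
  proof (cases "even j")
    case True
    then have "A j = 0" using IH[OF jb] by (auto simp: Inv_def)
    then show ?thesis by simp
  next
    case False
    have le: "even (i + 1 - j)" using i False jj by presburger
    have "0 < sg (i - 3) * (A j * Cc (i + 1 - j))"
    proof (rule prod_pos)
      show "sg (i - 3) = sg (j - 1) * sg (i + 1 - j - 3)" by (rule sg_split) (use i jj False in presburger)+
      show "0 < sg (j - 1) * A j" using IH[OF jb] False by (auto simp: Inv_def)
      show "0 < sg (i + 1 - j - 3) * Cc (i + 1 - j)" using IH[OF lb] le by (auto simp: Inv_def)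
    qed
    then show ?thesis by simp
  qed
  have t2: "0 \<le> sg (i - 3) * (B j * B (i + 1 - j))"
  proof -
    have "0 < sg (i - 3) * (B j * B (i + 1 - j))"
    proof (rule prod_pos)
      show "sg (i - 3) = sg (j - 2) * sg (i + 1 - j - 2)" by (rule sg_split) (use i jj in presburger)+
      show "0 < sg (j - 2) * B j" using IH[OF jb] by (auto simp: Inv_def)
      show "0 < sg (i + 1 - j - 2) * B (i + 1 - j)" using IH[OF lb] by (auto simp: Inv_def)
    qed
    then show ?thesis by simp
  qed
  have t3: "0 \<le> sg (i - 3) * (Cc j * A (i + 1 - j))"
  proof (cases "even (i + 1 - j)")
    case True
    then have "A (i + 1 - j) = 0" using IH[OF lb] by (auto simp: Inv_def)
    then show ?thesis by simp
  next
    case False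
    have ej: "even j" using i False jj by presburger
    have "0 < sg (i - 3) * (Cc j * A (i + 1 - j))"
    proof (rule prod_pos)
      show "sg (i - 3) = sg (j - 3) * sg (i + 1 - j - 1)" by (rule sg_split) (use i jj False in presburger)+
      show "0 < sg (j - 3) * Cc j" using IH[OF jb] ej by (auto simp: Inv_def)
      show "0 < sg (i + 1 - j - 1) * A (i + 1 - j)" using IH[OF lb] False by (auto simp: Inv_def)
    qed
    then show ?thesis by simp
  qed
  show ?thesis using t1 t2 t3 by (simp add: distrib_left)
qed

lemma termA_odd_pos:
  assumes i: "odd i" and j: "j \<in> {3..<i-1}" and oj: "odd j" and IH: "\<And>j. 3 \<le> j \<Longrightarrow> j < i \<Longrightarrow> Inv j"
  shows "0 < sg (i - 1) * (A j * A (i + 1 - j))"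
proof -
  have jb: "3 \<le> j" "j < i - 1" using j by auto
  have l: "odd (i + 1 - j)" using i oj jb by presburger
  have l2: "3 \<le> i + 1 - j" "i + 1 - j < i" using jb by auto
  show ?thesis
  proof (rule prod_pos)
    show "sg (i - 1) = sg (j - 1) * sg (i + 1 - j - 1)"
      by (rule sg_split) (use jb oj in presburger)+
    show "0 < sg (j - 1) * A j" using IH[of j] jb oj by (auto simp: Inv_def)
    show "0 < sg (i + 1 - j - 1) * A (i + 1 - j)" using IH[of "i + 1 - j"] l l2 by (auto simp: Inv_def)
  qed
qed

lemma kap2: "kap 2 = 1"
  by (simp add: kap_def gbinomial_prod_rev numeral_2_eq_2 lessThan_Suc)

lemma Inv_step:
  assumes i4: "4 \<le> i" and IH: "\<And>j. 3 \<le> j \<Longrightarrow> j < i \<Longrightarrow> Inv j"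
  shows "Inv i"
proof -
  have deg: "degree (RR j) \<le> j - 1" if "2 \<le> j" "j < i" for j
  proof (cases "j = 2")
    case True then show ?thesis by (simp add: RR2)
  next
    case False then show ?thesis using IH[of j] that by (simp add: Inv_def)
  qed
  have D: "degree (RR i) \<le> i - 1" by (rule degree_RR_step[OF i4 deg])
  have IHi1: "Inv (i - 1)" using IH[of "i - 1"] i4 by simp
  have Aev: "A i = 0" if ev: "even i"
  proof -
    have "A i = (\<Sum>j\<in>{3..<i-1}. A j * A (i + 1 - j))" by (rule A_step[OF i4 deg])
    also have "\<dots> = 0" by (intro sum.neutral ballI termA_even[OF ev _ IH])
    finally show ?thesis .
  qed
  have Aod: "0 < sg (i - 1) * A i" if od: "odd i"
  proof -
    have i5: "5 \<le> i" using i4 od by presburger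
    have "sg (i - 1) * A i = (\<Sum>j\<in>{3..<i-1}. sg (i - 1) * (A j * A (i + 1 - j)))"
      using A_step[OF i4 deg] by (simp add: sum_distrib_left)
    also have "0 < \<dots>"
    proof (rule sum_pos2[where i = 3])
      show "3 \<in> {3..<i-1}" using i5 by simp
      show "0 < sg (i - 1) * (A 3 * A (i + 1 - 3))"
        by (rule termA_odd_pos[OF od _ _ IH]) (use i5 in auto)
      show "0 \<le> sg (i - 1) * (A j * A (i + 1 - j))" if "j \<in> {3..<i-1}" for j
        by (rule termA_odd[OF od that IH])
    qed simp
    finally show ?thesis .
  qed
  have Bsum: "0 \<le> (\<Sum>j\<in>{3..<i-1}. sg (i - 2) * (A j * B (i + 1 - j) + B j * A (i + 1 - j)))"
    by (rule sum_nonneg) (rule termB[OF i4 _ IH])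
  have Bpos: "0 < sg (i - 2) * B i"
  proof -
    have e: "sg (i - 2) * B i = sg (i - 2) * (2 * (real i - 4) * A (i - 2)) + sg (i - 2) * A (i - 1)
        + (\<Sum>j\<in>{3..<i-1}. sg (i - 2) * (A j * B (i + 1 - j) + B j * A (i + 1 - j)))"
      using B_step[OF i4 deg] by (simp add: sum_distrib_left distrib_left sum.distrib)
    show ?thesis
    proof (cases "odd i")
      case True
      have i5: "5 \<le> i" using i4 True by presburger
      have IHi2: "Inv (i - 2)" using IH[of "i - 2"] i5 by simp
      have o2: "odd (i - 2)" using True i5 by presburger
      have s: "sg (i - 2) = sg (i - 2 - 1)"
      proof -
        have "sg (i - 2) = sg (i - 3) * sg 1" by (rule sg_split) (use True i5 in presburger)+
        moreover have "i - 2 - 1 = i - 3" by simp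
        ultimately show ?thesis by (simp add: sg_def)
      qed
      have p1: "0 < sg (i - 2 - 1) * A (i - 2)" using IHi2 o2 by (simp add: Inv_def)
      have t1: "0 < sg (i - 2) * (2 * (real i - 4) * A (i - 2))"
      proof -
        have eq: "sg (i - 2) * (2 * (real i - 4) * A (i - 2)) = (2 * (real i - 4)) * (sg (i - 2 - 1) * A (i - 2))"
          by (simp only: s[symmetric] mult_ac)
        have pos: "0 < 2 * (real i - 4)" using i5 by simp
        show ?thesis unfolding eq by (rule mult_pos_pos[OF pos p1])
      qed
      have t2: "A (i - 1) = 0" using IHi1 True i4 by (simp add: Inv_def)
      then have t2': "sg (i - 2) * A (i - 1) = 0" by simp
      show ?thesis unfolding e using t1 t2' Bsum by linarith
    next
      case False
      have t1: "sg (i - 2) * (2 * (real i - 4) * A (i - 2)) = 0"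
      proof (cases "i = 4")
        case True then show ?thesis by simp
      next
        case False
        then have "6 \<le> i" using i4 \<open>\<not> odd i\<close> by presburger
        then have "A (i - 2) = 0" using IH[of "i - 2"] \<open>\<not> odd i\<close> by (simp add: Inv_def)
        then show ?thesis by simp
      qed
      have t2: "0 < sg (i - 2) * A (i - 1)"
      proof -
        have "odd (i - 1)" using False i4 by presburger
        then have "0 < sg (i - 1 - 1) * A (i - 1)" using IHi1 by (simp add: Inv_def)
        moreover have "i - 1 - 1 = i - 2" by simp
        ultimately show ?thesis by simp
      qed
      show ?thesis unfolding e using t1 t2 Bsum by linarith
    qed
  qed
  have Cpos: "0 < sg (i - 3) * Cc i" if ev: "even i"
  proof -
    have Csum: "0 \<le> (\<Sum>j\<in>{3..<i-1}. sg (i - 3) * (A j * Cc (i + 1 - j) + B j * B (i + 1 - j) + Cc j * A (i + 1 - j)))"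
      by (rule sum_nonneg) (rule termC[OF ev i4 _ IH])
    have e: "sg (i - 3) * Cc i = sg (i - 3) * (if i = 4 then kap 2 else 2 * (real i - 5) * (real i - 3) * A (i - 3))
        + sg (i - 3) * (2 * (real i - 3) * B (i - 2)) + sg (i - 3) * B (i - 1)
        + (\<Sum>j\<in>{3..<i-1}. sg (i - 3) * (A j * Cc (i + 1 - j) + B j * B (i + 1 - j) + Cc j * A (i + 1 - j)))"
      using C_step[OF i4 deg] by (simp add: sum_distrib_left distrib_left sum.distrib)
    have s34: "sg (i - 3) = sg (i - 4)"
    proof -
      have "sg (i - 3) = sg (i - 4) * sg 1" by (rule sg_split) (use ev i4 in presburger)+
      then show ?thesis by (simp add: sg_def)
    qed
    have t1: "0 \<le> sg (i - 3) * (if i = 4 then kap 2 else 2 * (real i - 5) * (real i - 3) * A (i - 3))"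
    proof (cases "i = 4")
      case True then show ?thesis by (simp add: kap2 sg_def)
    next
      case False
      then have i6: "6 \<le> i" using i4 ev by presburger
      have o3: "odd (i - 3)" using ev i6 by presburger
      have "0 < sg (i - 3 - 1) * A (i - 3)" using IH[of "i - 3"] i6 o3 by (simp add: Inv_def)
      moreover have "i - 3 - 1 = i - 4" by simp
      ultimately have p: "0 < sg (i - 4) * A (i - 3)" by simp
      have eq: "sg (i - 3) * (2 * (real i - 5) * (real i - 3) * A (i - 3)) = (2 * (real i - 5) * (real i - 3)) * (sg (i - 4) * A (i - 3))"
        by (simp only: s34 mult_ac)
      have pos: "0 \<le> 2 * (real i - 5) * (real i - 3)" using i6 by simp
      have nn: "0 \<le> (2 * (real i - 5) * (real i - 3)) * (sg (i - 4) * A (i - 3))"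
        by (rule mult_nonneg_nonneg[OF pos]) (use p in simp)
      show ?thesis unfolding if_not_P[OF False] eq by (rule nn)
    qed
    have t2: "0 \<le> sg (i - 3) * (2 * (real i - 3) * B (i - 2))"
    proof -
      have p: "0 \<le> sg (i - 4) * B (i - 2)"
      proof (cases "i = 4")
        case True then show ?thesis by (simp add: B2 sg_def)
      next
        case False
        then have i6: "6 \<le> i" using i4 ev by presburger
        have "0 < sg (i - 2 - 2) * B (i - 2)" using IH[of "i - 2"] i6 by (simp add: Inv_def)
        moreover have "i - 2 - 2 = i - 4" by simp
        ultimately show ?thesis by simp
      qed
      have eq: "sg (i - 3) * (2 * (real i - 3) * B (i - 2)) = (2 * (real i - 3)) * (sg (i - 4) * B (i - 2))"
        by (simp only: s34 mult_ac)
      have pos: "0 \<le> 2 * (real i - 3)" using i4 by simp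
      show ?thesis unfolding eq by (rule mult_nonneg_nonneg[OF pos p])
    qed
    have t3: "0 < sg (i - 3) * B (i - 1)"
    proof -
      have "0 < sg (i - 1 - 2) * B (i - 1)" using IHi1 by (simp add: Inv_def)
      moreover have "i - 1 - 2 = i - 3" by simp
      ultimately show ?thesis by simp
    qed
    show ?thesis unfolding e using t1 t2 t3 Csum by linarith
  qed
  show ?thesis unfolding Inv_def using D Aev Aod Bpos Cpos by blast
qed

lemma Inv_all: "3 \<le> i \<Longrightarrow> Inv i"
proof (induction i rule: less_induct)
  case (less i)
  show ?case
  proof (cases "i = 3")
    case True then show ?thesis using Inv3 by simp
  next
    case False
    then have "4 \<le> i" using less.prems by simp
    then show ?thesis by (rule Inv_step) (use less.IH in auto)
  qed
qed

lemma degree_eqI': "coeff p d \<noteq> 0 \<Longrightarrow> (\<And>m. d < m \<Longrightarrow> coeff p m = 0) \<Longrightarrow> degree p = d"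
  by (meson antisym degree_le le_degree)

lemma int_poly_repr:
  assumes "intpoly Q"
  shows "map_poly of_int (map_poly floor Q) = Q"
proof (rule poly_eqI)
  fix n
  have "coeff Q n \<in> \<int>" using assms by (simp add: intpoly_def)
  then show "coeff (map_poly of_int (map_poly floor Q)) n = coeff Q n"
    by (simp add: coeff_map_poly)
qed

lemma degree_psi:
  assumes i: "3 \<le> i" and R: "RR i = psi Q S"
  shows "degree S = (i - 1) div 2 \<and> degree Q = (i - 3) div 2"
proof -
  have inv: "Inv i" by (rule Inv_all[OF i])
  have D: "degree (RR i) \<le> i - 1" using inv by (simp add: Inv_def)
  have high: "coeff (RR i) n = 0" if "i - 1 < n" for n using D that by (simp add: coeff_eq_0)
  have cS: "coeff (pcompose S zl) m = coeff (RR i) (2 * m)" for m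
    unfolding R coeff_psi by simp
  have cQ: "coeff (pcompose Q zl) m = coeff (RR i) (2 * m + 1)" for m
    unfolding R coeff_psi by simp
  have Bnz: "B i \<noteq> 0" using inv by (auto simp: Inv_def)
  show ?thesis
  proof (cases "odd i")
    case True
    have Anz: "A i \<noteq> 0" using inv True by (auto simp: Inv_def)
    have dS: "degree (pcompose S zl) = (i - 1) div 2"
    proof (rule degree_eqI')
      have "2 * ((i - 1) div 2) = i - 1" using True by presburger
      then show "coeff (pcompose S zl) ((i - 1) div 2) \<noteq> 0" using Anz unfolding cS A_def by simp
      fix m assume "(i - 1) div 2 < m"
      then have "i - 1 < 2 * m" by presburger
      then show "coeff (pcompose S zl) m = 0" unfolding cS by (rule high)
    qed
    have dQ: "degree (pcompose Q zl) = (i - 3) div 2"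
    proof (rule degree_eqI')
      have "2 * ((i - 3) div 2) + 1 = i - 2" using True i by presburger
      then show "coeff (pcompose Q zl) ((i - 3) div 2) \<noteq> 0" using Bnz unfolding cQ B_def by simp
      fix m assume "(i - 3) div 2 < m"
      then have "i - 1 < 2 * m + 1" using True i by presburger
      then show "coeff (pcompose Q zl) m = 0" unfolding cQ by (rule high)
    qed
    show ?thesis using dS dQ by (simp add: degree_zl)
  next
    case False
    have Az: "A i = 0" using inv False by (auto simp: Inv_def)
    have Cnz: "Cc i \<noteq> 0" using inv False by (auto simp: Inv_def)
    have dS: "degree (pcompose S zl) = (i - 1) div 2"
    proof (rule degree_eqI')
      have "2 * ((i - 1) div 2) = i - 2" using False i by presburger
      then show "coeff (pcompose S zl) ((i - 1) div 2) \<noteq> 0" using Bnz unfolding cS B_def by simp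
      fix m assume "(i - 1) div 2 < m"
      then have "i - 1 < 2 * m" using False i by presburger
      then show "coeff (pcompose S zl) m = 0" unfolding cS by (rule high)
    qed
    have dQ: "degree (pcompose Q zl) = (i - 3) div 2"
    proof (rule degree_eqI')
      have "2 * ((i - 3) div 2) + 1 = i - 3" using False i by presburger
      then show "coeff (pcompose Q zl) ((i - 3) div 2) \<noteq> 0" using Cnz unfolding cQ Cc_def by simp
      fix m assume m: "(i - 3) div 2 < m"
      show "coeff (pcompose Q zl) m = 0"
      proof (cases "2 * m + 1 = i - 1")
        case True
        then show ?thesis using Az unfolding cQ A_def by simp
      next
        case False
        then have "i - 1 < 2 * m + 1" using m \<open>\<not> odd i\<close> i by presburger
        then show ?thesis unfolding cQ by (rule high)
      qed
    qed
    show ?thesis using dS dQ by (simp add: degree_zl)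
  qed
qed

theorem proposition3:
  fixes i :: nat
  assumes "i > 2"
  shows "\<exists>Q S :: int poly.
           degree Q = (i - 3) div 2 \<and> degree S = (i - 1) div 2 \<and>
           a i = fps_X ^ (i - 2) *
             (fps_of_poly (map_poly of_int Q) * one_minus_4z_pow (- real (i - 2))
              + fps_of_poly (map_poly of_int S) * one_minus_4z_pow (- (real i - 3 / 2)))"
proof -
  have i: "3 \<le> i" using assms by simp
  obtain Q S where QS: "intpoly Q" "intpoly S" "RR i = psi Q S"
    "bb i = fps_of_poly S * om (of_int (3 - 2 * int i) / 2) + fps_of_poly Q * om ((of_int (3 - 2 * int i) + 1) / 2)"
    using RR_psi[OF i] by blast
  have deg: "degree S = (i - 1) div 2" "degree Q = (i - 3) div 2" using degree_psi[OF i QS(3)] by auto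
  define Qi where "Qi = map_poly floor Q"
  define Si where "Si = map_poly floor S"
  have Qr: "map_poly of_int Qi = Q" unfolding Qi_def by (rule int_poly_repr[OF QS(1)])
  have Sr: "map_poly of_int Si = S" unfolding Si_def by (rule int_poly_repr[OF QS(2)])
  have dQi: "degree Qi = degree Q"
  proof -
    have "degree (map_poly (of_int :: int \<Rightarrow> real) Qi) = degree Qi" by (rule degree_map_poly) simp
    then show ?thesis using Qr by simp
  qed
  have dSi: "degree Si = degree S"
  proof -
    have "degree (map_poly (of_int :: int \<Rightarrow> real) Si) = degree Si" by (rule degree_map_poly) simp
    then show ?thesis using Sr by simp
  qed
  have e1: "of_int (3 - 2 * int i) / 2 = - (real i - 3 / 2)" by simp
  have e2: "(of_int (3 - 2 * int i) + 1) / 2 = - real (i - 2)" using i by (simp add: of_nat_diff)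
  have "a i = fps_X ^ (i - 2) * bb i" using a_bb[of i] i by simp
  also have "bb i = fps_of_poly (map_poly of_int Qi) * one_minus_4z_pow (- real (i - 2))
              + fps_of_poly (map_poly of_int Si) * one_minus_4z_pow (- (real i - 3 / 2))"
    unfolding QS(4) Qr Sr e1 e2 by (simp add: add.commute)
  finally have eq: "a i = fps_X ^ (i - 2) *
     (fps_of_poly (map_poly of_int Qi) * one_minus_4z_pow (- real (i - 2))
      + fps_of_poly (map_poly of_int Si) * one_minus_4z_pow (- (real i - 3 / 2)))" .
  have dd: "degree Qi = (i - 3) div 2" "degree Si = (i - 1) div 2" using deg dQi dSi by simp_all
  show ?thesis
    by (rule exI[of _ Qi], rule exI[of _ Si]) (intro conjI dd eq)
qed


end
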